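(* Let $\gamma_a,\gamma_s>0$, $\sigma_B>0$, $q>0$, let $\beta_s$ be the piecewise linear coalbedo described in the context, and fix $\varepsilon_a\in(0,2)$. For $\lambda\ge0$ consider the system \[ \gamma_a T_a'=-\lambda(T_a-T_s)+\varepsilon_a\sigma_B|T_s|^3T_s-2\varepsilon_a\sigma_B|T_a|^3T_a,\qquad \gamma_s T_s'=-\lambda(T_s-T_a)-\sigma_B|T_s|^3T_s+\varepsilon_a\sigma_B|T_a|^3T_a+q\beta_s(T_s). \] Let $\lambda^*\ge0$ and let $(T_a^{eq,\lambda^*},T_s^{eq,\lambda^*})$ be a warm [respectively cold] equilibrium point of the system with $\lambda=\lambda^*$, in the sense that $T_s^{eq,\lambda^*}\notin[T_{s,-},T_{s,+}]$. Then for $\lambda$ close to $\lambda^*$ there exists a unique equilibrium point $(T_a^{eq,\lambda},T_s^{eq,\lambda})$ of the system with parameter $\lambda$ (close to $(T_a^{eq,\lambda^*},T_s^{eq,\lambda^*})$); it is asymptotically exponentially stable; the maps $\lambda\mapsto T_s^{eq,\lambda}$ and $\lambda\mapsto T_a^{eq,\lambda}$ are locally analytic; locally, $\lambda\mapsto T_s^{eq,\lambda}$ is decreasing; and locally $\lambda\mapsto T_a^{eq,\lambda}$ is increasing if $\varepsilon_a\in(0,1)$ and decreasing if $\varepsilon_a\in(1,2)$.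
   Context: The coalbedo is $\beta_s(T)=\beta_{s,-}$ for $T\le T_{s,-}$, $\beta_s(T)=\beta_{s,-}+(\beta_{s,+}-\beta_{s,-})\frac{T-T_{s,-}}{T_{s,+}-T_{s,-}}$ for $T\in[T_{s,-},T_{s,+}]$, and $\beta_s(T)=\beta_{s,+}$ for $T\ge T_{s,+}$, where $T_{s,+}>T_{s,-}>0$ and $\beta_{s,+}>\beta_{s,-}>0$. An equilibrium point is a point with nonnegative components where both right-hand sides vanish; warm means $T_s>T_{s,+}$, cold means $T_s<T_{s,-}$. *)

theory Defs
  imports "HOL-Analysis.Analysis"
begin

text \<open>Piecewise linear coalbedo beta_s with parameters Tm = T_{s,-}, Tp = T_{s,+},
  bm = beta_{s,-}, bp = beta_{s,+}.\<close>
definition coalbedo :: "real \<Rightarrow> real \<Rightarrow> real \<Rightarrow> real \<Rightarrow> real \<Rightarrow> real" where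
  "coalbedo Tm Tp bm bp T =
     (if T \<le> Tm then bm
      else if T \<ge> Tp then bp
      else bm + (bp - bm) * (T - Tm) / (Tp - Tm))"

definition rhs_a :: "real \<Rightarrow> real \<Rightarrow> real \<Rightarrow> real \<Rightarrow> real \<Rightarrow> real" where
  "rhs_a sB ea lam Ta Ts =
     - lam * (Ta - Ts) + ea * sB * \<bar>Ts\<bar>^3 * Ts - 2 * ea * sB * \<bar>Ta\<bar>^3 * Ta"

definition rhs_s :: "real \<Rightarrow> real \<Rightarrow> real \<Rightarrow> real \<Rightarrow> real \<Rightarrow> real \<Rightarrow> real \<Rightarrow> real \<Rightarrow> real
                     \<Rightarrow> real \<Rightarrow> real" where
  "rhs_s sB q ea Tm Tp bm bp lam Ta Ts =
     - lam * (Ts - Ta) - sB * \<bar>Ts\<bar>^3 * Ts + ea * sB * \<bar>Ta\<bar>^3 * Ta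
     + q * coalbedo Tm Tp bm bp Ts"

definition ebm_field ::
  "real \<Rightarrow> real \<Rightarrow> real \<Rightarrow> real \<Rightarrow> real \<Rightarrow> real \<Rightarrow> real \<Rightarrow> real \<Rightarrow> real \<Rightarrow> real
   \<Rightarrow> real \<times> real \<Rightarrow> real \<times> real" where
  "ebm_field ga gs sB q ea Tm Tp bm bp lam p =
     (rhs_a sB ea lam (fst p) (snd p) / ga,
      rhs_s sB q ea Tm Tp bm bp lam (fst p) (snd p) / gs)"

definition ebm_equilibrium ::
  "real \<Rightarrow> real \<Rightarrow> real \<Rightarrow> real \<Rightarrow> real \<Rightarrow> real \<Rightarrow> real \<Rightarrow> real
   \<Rightarrow> real \<times> real \<Rightarrow> bool" where
  "ebm_equilibrium sB q ea Tm Tp bm bp lam p \<longleftrightarrow>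
     fst p \<ge> 0 \<and> snd p \<ge> 0 \<and>
     rhs_a sB ea lam (fst p) (snd p) = 0 \<and>
     rhs_s sB q ea Tm Tp bm bp lam (fst p) (snd p) = 0"

definition exp_stable :: "(real \<times> real \<Rightarrow> real \<times> real) \<Rightarrow> real \<times> real \<Rightarrow> bool" where
  "exp_stable F p \<longleftrightarrow>
     (\<exists>r>0. \<exists>C>0. \<exists>mu>0. \<forall>T\<ge>0. \<forall>x :: real \<Rightarrow> real \<times> real.
        (\<forall>t\<in>{0..T}. (x has_vector_derivative F (x t)) (at t within {0..T})) \<and>
        norm (x 0 - p) < r \<longrightarrow>
        (\<forall>t\<in>{0..T}. norm (x t - p) \<le> C * exp (- mu * t) * norm (x 0 - p)))"

definition real_analytic_on :: "(real \<Rightarrow> real) \<Rightarrow> real set \<Rightarrow> bool" where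
  "real_analytic_on f S \<longleftrightarrow>
     (\<forall>x\<in>S. \<exists>r>0. \<exists>c :: nat \<Rightarrow> real.
        \<forall>y. \<bar>y - x\<bar> < r \<longrightarrow> (\<lambda>n. c n * (y - x) ^ n) sums f y)"

end

theory Submission
  imports Defs "HOL-Complex_Analysis.Complex_Analysis"
begin

lemma nonincr_mvt:
  fixes h h' :: "real \<Rightarrow> real"
  assumes "0 < t" "t \<le> T" "continuous_on {0..T} h"
    and "\<And>y. 0 < y \<Longrightarrow> y < t \<Longrightarrow> (h has_real_derivative h' y) (at y within {0..T})"
    and "\<And>y. 0 < y \<Longrightarrow> y < t \<Longrightarrow> h' y \<le> 0"
  shows "h t \<le> h 0"
proof -
  have c: "continuous_on {0..t} h" using assms(2,3) continuous_on_subset by fastforce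
  have "\<exists>\<xi>. 0 < \<xi> \<and> \<xi> < t \<and> h t - h 0 = (\<lambda>d. h' \<xi> * d) (t - 0)"
  proof (rule mvt[OF assms(1) c])
    fix y assume y: "0 < y" "y < t"
    have "at y within {0..T} = at y" using y assms(2) by (intro at_within_Icc_at) auto
    then show "(h has_derivative (\<lambda>d. h' y * d)) (at y)"
      using assms(4)[OF y] by (simp add: has_field_derivative_def)
  qed auto
  then obtain \<xi> where "0 < \<xi>" "\<xi> < t" "h t - h 0 = h' \<xi> * t" by auto
  moreover have "h' \<xi> \<le> 0" using assms(5) \<open>0 < \<xi>\<close> \<open>\<xi> < t\<close> by auto
  ultimately show ?thesis using assms(1) by (metis diff_le_0_iff_le mult_nonpos_nonneg less_imp_le)
qed

lemma cs_bound: "(pa*u + pb* v)^2 \<le> (pa^2+pb^2)*(u^2+v^2)" for pa pb u v :: real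
proof -
  have "0 \<le> (pa* v - pb*u)^2" by simp
  then show ?thesis by (simp add: power2_eq_square algebra_simps)
qed

lemma lyap_stable:
  fixes F :: "real \<times> real \<Rightarrow> real \<times> real" and a s mA mB mC mD K \<eta> :: real
  assumes tr: "mA + mD < 0" and dt: "mA*mD - mB*mC > 0" and eta: "\<eta> > 0" and K: "K \<ge> 0"
    and rem: "\<And>u v. \<bar>u\<bar> < \<eta> \<Longrightarrow> \<bar>v\<bar> < \<eta> \<Longrightarrow>
        \<bar>fst (F (a+u, s+v)) - (mA*u + mB* v)\<bar> \<le> K*(u^2+v^2) \<and>
        \<bar>snd (F (a+u, s+v)) - (mC*u + mD* v)\<bar> \<le> K*(u^2+v^2)"
  shows "exp_stable F (a, s)"
proof -
  define \<tau> where "\<tau> = mA + mD"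
  define \<Delta> where "\<Delta> = mA*mD - mB*mC"
  have tau: "\<tau> < 0" and Dp: "\<Delta> > 0" using tr dt by (auto simp: \<tau>_def \<Delta>_def)
  define V where "V u v = \<Delta>*(u^2+v^2) + (mD*u - mB* v)^2 + (mA* v - mC*u)^2" for u v
  define Vu where "Vu u v = 2*\<Delta>*u + 2*mD*(mD*u - mB* v) - 2*mC*(mA* v - mC*u)" for u v
  define Vv where "Vv u v = 2*\<Delta>* v - 2*mB*(mD*u - mB* v) + 2*mA*(mA* v - mC*u)" for u v
  define N where "N = \<bar>mA\<bar> + \<bar>mB\<bar> + \<bar>mC\<bar> + \<bar>mD\<bar>"
  define U where "U = \<Delta> + 2*N^2"
  define L where "L = 2*\<Delta> + 4*N^2"
  have Npos: "N \<ge> 0" by (simp add: N_def)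
  have Upos: "U > 0" using Dp unfolding U_def by (intro add_pos_nonneg) auto
  have Lpos: "L > 0" using Dp unfolding L_def by (intro add_pos_nonneg) auto
  have Vlow: "\<Delta>*(u^2+v^2) \<le> V u v" for u v by (simp add: V_def)
  have Vup: "V u v \<le> U*(u^2+v^2)" for u v
  proof -
    have "(mD*u - mB* v)^2 \<le> (mD^2 + mB^2)*(u^2+v^2)"
      using cs_bound[of mD u "-mB" v] by simp
    also have "mD^2 + mB^2 \<le> N^2"
    proof -
      have "mD^2 + mB^2 = \<bar>mD\<bar>^2 + \<bar>mB\<bar>^2" by simp
      also have "\<dots> \<le> (\<bar>mD\<bar> + \<bar>mB\<bar>)^2" by (simp add: power2_eq_square algebra_simps)
      also have "\<dots> \<le> N^2" unfolding N_def by (rule power_mono) auto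
      finally show ?thesis .
    qed
    hence "(mD^2 + mB^2)*(u^2+v^2) \<le> N^2*(u^2+v^2)" by (rule mult_right_mono) simp
    finally have 1: "(mD*u - mB* v)^2 \<le> N^2*(u^2+v^2)" .
    have "(mA* v - mC*u)^2 \<le> (mC^2 + mA^2)*(u^2+v^2)"
      using cs_bound[of "-mC" u mA v] by (simp add: algebra_simps)
    also have "mC^2 + mA^2 \<le> N^2"
    proof -
      have "mC^2 + mA^2 = \<bar>mC\<bar>^2 + \<bar>mA\<bar>^2" by simp
      also have "\<dots> \<le> (\<bar>mC\<bar> + \<bar>mA\<bar>)^2" by (simp add: power2_eq_square algebra_simps)
      also have "\<dots> \<le> N^2" unfolding N_def by (rule power_mono) auto
      finally show ?thesis .
    qed
    hence "(mC^2 + mA^2)*(u^2+v^2) \<le> N^2*(u^2+v^2)" by (rule mult_right_mono) simp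
    finally have 2: "(mA* v - mC*u)^2 \<le> N^2*(u^2+v^2)" .
    show ?thesis using 1 2 by (simp add: V_def U_def algebra_simps)
  qed
  have lin: "Vu u v * (mA*u + mB* v) + Vv u v * (mC*u + mD* v) = 2*\<tau>*\<Delta>*(u^2+v^2)" for u v
    unfolding Vu_def Vv_def \<tau>_def \<Delta>_def by (simp add: power2_eq_square algebra_simps)
  have absN: "\<bar>m\<bar> \<le> N" if "m \<in> {mA,mB,mC,mD}" for m using that by (auto simp: N_def)
  have Vub: "\<bar>Vu u v\<bar> \<le> L*(\<bar>u\<bar>+\<bar>v\<bar>)" "\<bar>Vv u v\<bar> \<le> L*(\<bar>u\<bar>+\<bar>v\<bar>)" for u v
  proof -
    have lin1: "\<bar>m*x - m'*y\<bar> \<le> N*(\<bar>x\<bar>+\<bar>y\<bar>)" if "\<bar>m\<bar> \<le> N" "\<bar>m'\<bar> \<le> N" for m m' x y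
    proof -
      have "\<bar>m*x - m'*y\<bar> \<le> \<bar>m\<bar>*\<bar>x\<bar> + \<bar>m'\<bar>*\<bar>y\<bar>" by (metis abs_mult abs_triangle_ineq4)
      also have "\<dots> \<le> N*\<bar>x\<bar> + N*\<bar>y\<bar>" using that by (intro add_mono mult_right_mono) auto
      finally show ?thesis by (simp add: algebra_simps)
    qed
    have prodb: "\<bar>m * w\<bar> \<le> N*(N*(\<bar>u\<bar>+\<bar>v\<bar>))" if "\<bar>m\<bar> \<le> N" "\<bar>w\<bar> \<le> N*(\<bar>u\<bar>+\<bar>v\<bar>)" for m w
      unfolding abs_mult using that Npos by (intro mult_mono) auto
    have uu: "\<bar>u\<bar> \<le> \<bar>u\<bar>+\<bar>v\<bar>" "\<bar>v\<bar> \<le> \<bar>u\<bar>+\<bar>v\<bar>" by auto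
    have A1: "\<bar>mD*(mD*u - mB* v)\<bar> \<le> N*(N*(\<bar>u\<bar>+\<bar>v\<bar>))" by (intro prodb lin1 absN) auto
    have A2: "\<bar>mC*(mA* v - mC*u)\<bar> \<le> N*(N*(\<bar>u\<bar>+\<bar>v\<bar>))"
    proof -
      have "\<bar>mA* v - mC*u\<bar> \<le> N*(\<bar>v\<bar>+\<bar>u\<bar>)" by (intro lin1 absN) auto
      then show ?thesis by (intro prodb absN) (auto simp: add.commute)
    qed
    have A3: "\<bar>mB*(mD*u - mB* v)\<bar> \<le> N*(N*(\<bar>u\<bar>+\<bar>v\<bar>))" by (intro prodb lin1 absN) auto
    have A4: "\<bar>mA*(mA* v - mC*u)\<bar> \<le> N*(N*(\<bar>u\<bar>+\<bar>v\<bar>))"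
    proof -
      have "\<bar>mA* v - mC*u\<bar> \<le> N*(\<bar>v\<bar>+\<bar>u\<bar>)" by (intro lin1 absN) auto
      then show ?thesis by (intro prodb absN) (auto simp: add.commute)
    qed
    have D1: "\<bar>\<Delta>*u\<bar> \<le> \<Delta>*(\<bar>u\<bar>+\<bar>v\<bar>)" "\<bar>\<Delta>* v\<bar> \<le> \<Delta>*(\<bar>u\<bar>+\<bar>v\<bar>)"
      using Dp by (auto simp: abs_mult intro!: mult_left_mono)
    show "\<bar>Vu u v\<bar> \<le> L*(\<bar>u\<bar>+\<bar>v\<bar>)"
      using A1 A2 D1 unfolding Vu_def L_def by (simp add: power2_eq_square algebra_simps abs_le_iff)
    show "\<bar>Vv u v\<bar> \<le> L*(\<bar>u\<bar>+\<bar>v\<bar>)"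
      using A3 A4 D1 unfolding Vv_def L_def by (simp add: power2_eq_square algebra_simps abs_le_iff)
  qed
  define c where "c = -\<tau>*\<Delta>/U"
  have cpos: "c > 0" using tau Dp Upos mult_neg_pos[OF tau Dp] by (simp add: c_def divide_neg_pos)
  define X where "X = -\<tau>*\<Delta>"
  have Xpos: "X > 0" using tau Dp by (simp add: X_def mult_neg_pos)
  define \<eta>0 where "\<eta>0 = min \<eta> (X/(4*L*K+1))"
  have LK: "4*L*K \<ge> 0" using Lpos K by simp
  have dpos: "4*L*K+1 > 0" using LK by linarith
  have qpos: "X/(4*L*K+1) > 0" using Xpos dpos by simp
  have eta0: "\<eta>0 > 0" "\<eta>0 \<le> \<eta>" using eta qpos by (auto simp: \<eta>0_def)
  have eta0b: "4*L*K*\<eta>0 \<le> X"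
  proof -
    have "\<eta>0 \<le> X/(4*L*K+1)" by (simp add: \<eta>0_def)
    hence "(4*L*K+1)*\<eta>0 \<le> X" using LK by (simp add: field_simps)
    thus ?thesis using eta0 by (simp add: algebra_simps)
  qed
  have key: "Vu u v * fst (F (a+u, s+v)) + Vv u v * snd (F (a+u, s+v)) \<le> -c * V u v"
    if uv: "\<bar>u\<bar> < \<eta>0" "\<bar>v\<bar> < \<eta>0" for u v
  proof -
    define r1 where "r1 = fst (F (a+u, s+v)) - (mA*u + mB* v)"
    define r2 where "r2 = snd (F (a+u, s+v)) - (mC*u + mD* v)"
    define E where "E = u^2+v^2"
    have E0: "E \<ge> 0" by (simp add: E_def)
    have rb: "\<bar>r1\<bar> \<le> K*E" "\<bar>r2\<bar> \<le> K*E"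
      using rem[of u v] uv eta0 by (auto simp: r1_def r2_def E_def)
    have uvs: "\<bar>u\<bar>+\<bar>v\<bar> \<le> 2*\<eta>0" using uv by simp
    have b1: "\<bar>Vu u v * r1\<bar> \<le> (L*(2*\<eta>0))*(K*E)"
      unfolding abs_mult
    proof (rule mult_mono)
      show "\<bar>Vu u v\<bar> \<le> L*(2*\<eta>0)" using Vub(1)[of u v] uvs Lpos
        by (meson mult_left_mono less_imp_le order_trans)
    qed (use rb Lpos eta0 in auto)
    have b2: "\<bar>Vv u v * r2\<bar> \<le> (L*(2*\<eta>0))*(K*E)"
      unfolding abs_mult
    proof (rule mult_mono)
      show "\<bar>Vv u v\<bar> \<le> L*(2*\<eta>0)" using Vub(2)[of u v] uvs Lpos
        by (meson mult_left_mono less_imp_le order_trans)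
    qed (use rb Lpos eta0 in auto)
    have "(L*(2*\<eta>0))*(K*E) + (L*(2*\<eta>0))*(K*E) = (4*L*K*\<eta>0)*E" by (simp add: algebra_simps)
    also have "\<dots> \<le> X*E" using eta0b E0 by (rule mult_right_mono)
    finally have b3: "\<bar>Vu u v * r1\<bar> + \<bar>Vv u v * r2\<bar> \<le> X*E" using b1 b2 by linarith
    have "Vu u v * fst (F (a+u, s+v)) + Vv u v * snd (F (a+u, s+v))
        = (Vu u v * (mA*u + mB* v) + Vv u v * (mC*u + mD* v)) + (Vu u v * r1 + Vv u v * r2)"
      by (simp add: r1_def r2_def algebra_simps)
    also have "\<dots> = -2*X*E + (Vu u v * r1 + Vv u v * r2)" using lin[of u v] by (simp add: X_def E_def)
    also have "\<dots> \<le> -X*E" using b3 abs_ge_self[of "Vu u v * r1"] abs_ge_self[of "Vv u v * r2"] by linarith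
    also have "\<dots> \<le> -c * V u v"
    proof -
      have "c * V u v \<le> c * (U*E)" using Vup[of u v] cpos by (simp add: E_def)
      also have "\<dots> = X*E" using Upos by (simp add: c_def X_def)
      finally show ?thesis by simp
    qed
    finally show ?thesis .
  qed
  define c0 where "c0 = \<Delta>*\<eta>0^2/2"
  have c0pos: "c0 > 0" using Dp eta0 by (simp add: c0_def)
  define r where "r = sqrt (c0/U)"
  have rpos: "r > 0" using c0pos Upos by (simp add: r_def)
  define C where "C = sqrt (U/\<Delta>)"
  have Cpos: "C > 0" using Upos Dp by (simp add: C_def)
  have mupos: "c/2 > 0" using cpos by simp
  have main: "\<forall>T\<ge>0. \<forall>x :: real \<Rightarrow> real \<times> real.
        (\<forall>t\<in>{0..T}. (x has_vector_derivative F (x t)) (at t within {0..T})) \<and>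
        norm (x 0 - (a, s)) < r \<longrightarrow>
        (\<forall>t\<in>{0..T}. norm (x t - (a, s)) \<le> C * exp (- (c/2) * t) * norm (x 0 - (a, s)))"
  proof (intro allI impI)
    fix T :: real and x :: "real \<Rightarrow> real \<times> real"
    assume T: "T \<ge> 0"
      and hx: "(\<forall>t\<in>{0..T}. (x has_vector_derivative F (x t)) (at t within {0..T})) \<and> norm (x 0 - (a, s)) < r"
    have dx: "\<And>t. t \<in> {0..T} \<Longrightarrow> (x has_vector_derivative F (x t)) (at t within {0..T})"
      and x0: "norm (x 0 - (a, s)) < r" using hx by auto
    define e1 where "e1 t = fst (x t) - a" for t
    define e2 where "e2 t = snd (x t) - s" for t
    define g where "g t = V (e1 t) (e2 t)" for t
    define D where "D t = Vu (e1 t) (e2 t) * fst (F (x t)) + Vv (e1 t) (e2 t) * snd (F (x t))" for t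
    have xeq: "x t = (a + e1 t, s + e2 t)" for t by (simp add: e1_def e2_def)
    have nrm: "norm (x t - (a, s)) ^ 2 = e1 t ^ 2 + e2 t ^ 2" for t
    proof -
      have "x t - (a, s) = (e1 t, e2 t)" by (simp add: e1_def e2_def prod_eq_iff)
      then show ?thesis by (simp add: norm_Pair)
    qed
    have contx: "continuous_on {0..T} x"
      unfolding continuous_on_eq_continuous_within using dx has_vector_derivative_continuous by blast
    have contg: "continuous_on {0..T} g"
      unfolding g_def V_def e1_def e2_def by (intro continuous_intros contx)
    have d1: "(e1 has_real_derivative fst (F (x t))) (at t within {0..T})" if "t \<in> {0..T}" for t
      unfolding e1_def has_real_derivative_iff_has_vector_derivative
      by (rule derivative_eq_intros bounded_linear.has_vector_derivative[OF bounded_linear_fst, OF dx[OF that]] | simp)+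
    have d2: "(e2 has_real_derivative snd (F (x t))) (at t within {0..T})" if "t \<in> {0..T}" for t
      unfolding e2_def has_real_derivative_iff_has_vector_derivative
      by (rule derivative_eq_intros bounded_linear.has_vector_derivative[OF bounded_linear_snd, OF dx[OF that]] | simp)+
    have dg: "(g has_real_derivative D t) (at t within {0..T})" if "t \<in> {0..T}" for t
    proof -
      have "((\<lambda>t. V (e1 t) (e2 t)) has_real_derivative D t) (at t within {0..T})"
        unfolding V_def D_def
        apply (rule derivative_eq_intros d1[OF that] d2[OF that] refl)+
        by (simp add: Vu_def Vv_def algebra_simps power2_eq_square)
      then show ?thesis by (simp add: g_def[abs_def])
    qed
    have gnn: "g t \<ge> 0" for t unfolding g_def V_def using Dp by simp
    have region: "\<bar>e1 t\<bar> < \<eta>0 \<and> \<bar>e2 t\<bar> < \<eta>0" if "g t \<le> c0" for t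
    proof -
      have "\<Delta>*(e1 t^2 + e2 t^2) \<le> \<Delta>*(\<eta>0^2/2)" using Vlow[of "e1 t" "e2 t"] that by (simp add: g_def c0_def)
      hence "e1 t^2 + e2 t^2 \<le> \<eta>0^2/2" using Dp by (simp only: mult_le_cancel_left_pos)
      moreover have "\<eta>0^2 > 0" using eta0 by simp
      ultimately have "\<bar>e1 t\<bar>^2 < \<eta>0^2" "\<bar>e2 t\<bar>^2 < \<eta>0^2"
        using zero_le_power2[of "e1 t"] zero_le_power2[of "e2 t"] unfolding power2_abs by linarith+
      thus ?thesis using eta0 by (auto intro: power2_less_imp_less)
    qed
    have Dneg: "D t \<le> -c * g t" if "g t \<le> c0" for t
      using key[of "e1 t" "e2 t"] region[OF that] by (simp add: D_def g_def xeq[of t])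
    have g0: "g 0 < c0"
    proof -
      have "g 0 \<le> U * norm (x 0 - (a, s)) ^ 2" using Vup[of "e1 0" "e2 0"] nrm[of 0] by (simp add: g_def)
      also have "\<dots> < U * r^2" using x0 Upos by (intro mult_strict_left_mono power_strict_mono) auto
      also have "\<dots> = c0" using c0pos Upos by (simp add: r_def)
      finally show ?thesis .
    qed
    have inv: "g t < c0" if t: "t \<in> {0..T}" for t
    proof (rule ccontr)
      assume "\<not> g t < c0"
      define B where "B = {0..t} \<inter> g -` {c0..}"
      have contB: "continuous_on {0..t} g" using t by (intro continuous_on_subset[OF contg]) auto
      have clB: "closed B" unfolding B_def by (rule continuous_closed_preimage[OF contB]) auto
      have neB: "B \<noteq> {}" using \<open>\<not> g t < c0\<close> t by (auto simp: B_def)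
      have bdB: "bdd_below B" by (auto simp: B_def bdd_below_def)
      define t1 where "t1 = Inf B"
      have t1B: "t1 \<in> B" using closed_contains_Inf[OF neB bdB clB] by (simp add: t1_def)
      have t1lo: "t1 \<le> y" if "y \<in> B" for y using cInf_lower[OF that bdB] by (simp add: t1_def)
      have t1pos: "t1 > 0"
      proof -
        have "t1 \<ge> 0" using t1B by (auto simp: B_def)
        moreover have "t1 \<noteq> 0" using t1B g0 by (auto simp: B_def)
        ultimately show ?thesis by simp
      qed
      have below: "g y < c0" if "0 \<le> y" "y < t1" for y
      proof (rule ccontr)
        assume "\<not> g y < c0"
        hence "y \<in> B" using that t1B by (auto simp: B_def)
        from t1lo[OF this] that(2) show False by linarith
      qed
      have t1T: "t1 \<le> T" using t1B t by (auto simp: B_def)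
      have "g t1 \<le> g 0"
      proof (rule nonincr_mvt[OF t1pos t1T contg])
        fix y assume y: "0 < y" "y < t1"
        show "(g has_real_derivative D y) (at y within {0..T})" using dg y t1T by auto
        have "D y \<le> -c * g y" using Dneg[of y] below[of y] y by simp
        moreover have "c * g y \<ge> 0" using gnn[of y] cpos by simp
        ultimately show "D y \<le> 0" by linarith
      qed
      moreover have "c0 \<le> g t1" using t1B by (simp add: B_def)
      ultimately show False using g0 by simp
    qed
    define h where "h t = exp (c*t) * g t" for t
    have hdec: "h t \<le> h 0" if t: "t \<in> {0..T}" for t
    proof (cases "t = 0")
      case False
      hence tpos: "0 < t" using t by simp
      show ?thesis
      proof (rule nonincr_mvt[OF tpos _ _, where T=T and h'="\<lambda>y. exp (c*y) * c * g y + exp (c*y) * D y"])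
        show "t \<le> T" using t by simp
        show "continuous_on {0..T} h" unfolding h_def by (intro continuous_intros contg)
        fix y assume y: "0 < y" "y < t"
        hence yT: "y \<in> {0..T}" using t by simp
        show "(h has_real_derivative exp (c*y) * c * g y + exp (c*y) * D y) (at y within {0..T})"
          unfolding h_def[abs_def]
          by (rule derivative_eq_intros dg[OF yT] refl | simp)+
        have "D y \<le> -c * g y" using Dneg inv[OF yT] by (simp add: less_imp_le)
        hence "c * g y + D y \<le> 0" by simp
        hence "exp (c*y) * (c * g y + D y) \<le> 0" by (simp add: mult_nonpos_nonneg mult_le_0_iff)
        thus "exp (c*y) * c * g y + exp (c*y) * D y \<le> 0" by (simp add: algebra_simps)
      qed
    qed simp
    show "\<forall>t\<in>{0..T}. norm (x t - (a, s)) \<le> C * exp (- (c/2) * t) * norm (x 0 - (a, s))"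
    proof
      fix t assume t: "t \<in> {0..T}"
      define n where "n = norm (x t - (a, s))"
      define n0 where "n0 = norm (x 0 - (a, s))"
      have ht: "exp (c*t) * g t \<le> g 0" using hdec[OF t] by (simp add: h_def)
      have "g t = exp (-(c*t)) * (exp (c*t) * g t)"
        by (simp add: mult.assoc[symmetric] exp_add[symmetric])
      also have "\<dots> \<le> exp (-(c*t)) * g 0" using ht by (intro mult_left_mono) auto
      finally have gt: "g t \<le> exp (-(c*t)) * g 0" .
      have "\<Delta> * n^2 \<le> g t" using Vlow[of "e1 t" "e2 t"] nrm[of t] by (simp add: g_def n_def)
      also have "\<dots> \<le> exp (-(c*t)) * g 0" by (rule gt)
      also have "\<dots> \<le> exp (-(c*t)) * (U * n0^2)"
        using Vup[of "e1 0" "e2 0"] nrm[of 0] by (intro mult_left_mono) (auto simp: g_def n0_def)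
      finally have "n^2 * \<Delta> \<le> exp (-(c*t)) * (U * n0^2)" by (simp add: mult.commute)
      hence A: "n^2 \<le> exp (-(c*t)) * (U * n0^2) / \<Delta>" using Dp by (simp add: pos_le_divide_eq)
      have e2: "exp (- (c/2) * t) ^ 2 = exp (-(c*t))"
        by (simp add: power2_eq_square exp_add[symmetric])
      have C2: "C^2 = U/\<Delta>" using Upos Dp by (simp add: C_def)
      have "(C * exp (- (c/2) * t) * n0)^2 = C^2 * exp (- (c/2) * t) ^ 2 * n0^2"
        by (simp only: power_mult_distrib)
      also have "\<dots> = exp (-(c*t)) * (U * n0^2) / \<Delta>" by (simp only: e2 C2) simp
      finally have B: "n^2 \<le> (C * exp (- (c/2) * t) * n0)^2" using A by simp
      show "norm (x t - (a, s)) \<le> C * exp (- (c/2) * t) * norm (x 0 - (a, s))"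
        unfolding n_def[symmetric] n0_def[symmetric]
        by (rule power2_le_imp_le[OF B]) (use Cpos in \<open>simp add: n0_def\<close>)
    qed
  qed
  show ?thesis unfolding exp_stable_def using rpos Cpos mupos main by blast
qed


lemma eq_pos:
  fixes sB q ea b lam a s :: real
  assumes sB: "sB > 0" and q: "q > 0" and ea: "ea > 0" and b: "b > 0" and lam: "lam \<ge> 0"
    and a0: "a \<ge> 0" and s0: "s \<ge> 0"
    and E1: "-lam * (a - s) + ea * sB * s^4 - 2 * ea * sB * a^4 = 0"
    and E2: "-lam * (s - a) - sB * s^4 + ea * sB * a^4 + q * b = 0"
  shows "0 < a \<and> a < s"
proof -
  have k: "ea * sB > 0" using ea sB by simp
  have as: "a < s"
  proof (rule ccontr)
    assume "\<not> a < s"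
    hence sa: "s \<le> a" by simp
    hence "s^4 \<le> a^4" using s0 by (intro power_mono) auto
    have "lam * (s-a) \<le> 0" using lam sa by (simp add: mult_nonneg_nonpos)
    moreover have "lam * (s-a) = 2 * (ea * sB) * a^4 - (ea * sB) * s^4" using E1 by (simp add: algebra_simps)
    moreover have "(ea * sB) * s^4 \<le> (ea * sB) * a^4" using \<open>s^4 \<le> a^4\<close> k by (intro mult_left_mono) auto
    ultimately have "(ea * sB) * a^4 \<le> 0" by linarith
    hence "(ea * sB) * a^4 \<le> (ea * sB) * 0" by simp
    hence "a^4 \<le> 0" using k by (simp only: mult_le_cancel_left_pos)
    hence "a = 0" using a0 by (metis le_less not_le zero_less_power)
    hence "s = 0" using sa s0 by simp
    thus False using E2 \<open>a = 0\<close> q b by simp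
  qed
  have "a \<noteq> 0"
  proof
    assume "a = 0"
    hence "lam * s + (ea * sB) * s^4 = 0" using E1 by (simp add: algebra_simps)
    moreover have "lam * s \<ge> 0" using lam s0 by simp
    moreover have "(ea * sB) * s^4 > 0" using k as \<open>a = 0\<close> by simp
    ultimately show False by linarith
  qed
  thus ?thesis using a0 as by simp
qed

lemma det_pos:
  fixes sB ea lam a s :: real
  assumes sB: "sB > 0" and ea: "ea > 0" "ea < 2" and lam: "lam \<ge> 0"
    and a: "0 < a" "a < s"
    and E1: "-lam * (a - s) + ea * sB * s^4 - 2 * ea * sB * a^4 = 0"
  shows "(lam + 8 * ea * sB * a^3) * (lam + 4 * sB * s^3) - (lam + 4 * ea * sB * s^3) * (lam + 4 * ea * sB * a^3) > 0"
proof -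
  define A where "A = 4 * sB * a^3"
  define S where "S = 4 * sB * s^3"
  have Ap: "A > 0" and Sp: "S > 0" using sB a by (auto simp: A_def S_def)
  have det: "(lam + 8 * ea * sB * a^3) * (lam + 4 * sB * s^3) - (lam + 4 * ea * sB * s^3) * (lam + 4 * ea * sB * a^3)
      = lam * (S * (1-ea) + ea * A) + ea * A * S * (2-ea)"
    by (simp add: A_def S_def algebra_simps)
  show ?thesis
  proof (cases "ea \<le> 1")
    case True
    have "lam * (S * (1-ea) + ea * A) \<ge> 0" using True lam Ap Sp ea by simp
    moreover have "ea * A * S * (2-ea) > 0" using Ap Sp ea by simp
    ultimately show ?thesis unfolding det by linarith
  next
    case False
    define P where "P = 2 * a^4 - s^4"
    have lP: "lam * (s-a) = ea * sB * P" using E1 by (simp add: P_def algebra_simps)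
    have Pnn: "P \<ge> 0"
    proof -
      have "lam * (s-a) \<ge> 0" using lam a by simp
      hence "ea * sB * P \<ge> 0" using lP by simp
      moreover have "ea * sB > 0" using ea sB by simp
      ultimately show ?thesis by (auto simp: zero_le_mult_iff)
    qed
    have s3: "s^3 < 2 * a^3"
    proof (rule ccontr)
      assume "\<not> s^3 < 2 * a^3"
      hence h: "2 * a^3 \<le> s^3" by simp
      have "2 * a^4 = a * (2 * a^3)" by (simp add: power_numeral_reduce)
      also have "\<dots> \<le> a * s^3" using h a by (intro mult_left_mono) auto
      also have "\<dots> < s * s^3" using a by (intro mult_strict_right_mono) auto
      also have "\<dots> = s^4" by (simp add: power_numeral_reduce)
      finally have "s^4 > 2 * a^4" .
      thus False using Pnn by (simp add: P_def)
    qed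
    have SA: "S < 2 * A" using s3 sB by (simp add: S_def A_def)
    define f where "f e = sB * P * (S + e * (A - S)) + A * S * (2-e) * (s-a)" for e
    have f1: "f 1 > 0"
    proof -
      have "sB * P * A \<ge> 0" using sB Pnn Ap by simp
      moreover have "A * S * (s-a) > 0" using Ap Sp a by simp
      ultimately show ?thesis by (simp add: f_def)
    qed
    have f2: "f 2 \<ge> 0" using sB Pnn SA by (simp add: f_def)
    have "f ea = (2-ea) * f 1 + (ea-1) * f 2" by (simp add: f_def algebra_simps)
    also have "\<dots> > 0"
    proof -
      have "(2-ea) * f 1 > 0" using ea f1 by simp
      moreover have "(ea-1) * f 2 \<ge> 0" using False f2 by simp
      ultimately show ?thesis by linarith
    qed
    finally have fpos: "f ea > 0" .
    have "(lam * (S * (1-ea) + ea * A) + ea * A * S * (2-ea)) * (s-a) = ea * f ea"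
    proof -
      have "(lam * (S * (1-ea) + ea * A) + ea * A * S * (2-ea)) * (s-a)
          = (lam * (s-a)) * (S * (1-ea) + ea * A) + ea * A * S * (2-ea) * (s-a)" by (simp add: algebra_simps)
      also have "\<dots> = ea * f ea" unfolding lP by (simp add: f_def algebra_simps)
      finally show ?thesis .
    qed
    moreover have "ea * f ea > 0" using ea fpos by simp
    ultimately have "(lam * (S * (1-ea) + ea * A) + ea * A * S * (2-ea)) * (s-a) > 0" by simp
    thus ?thesis unfolding det using a by (simp add: zero_less_mult_iff)
  qed
qed

lemma cramer2:
  fixes J11 J12 J21 J22 x y d :: "'a::comm_ring"
  assumes "J11 * x + J12 * y = -d" "J21 * x + J22 * y = d"
  shows "(J11 * J22 - J12 * J21) * y = d * (J11+J21)" "(J11 * J22 - J12 * J21) * x = -(d * (J22+J12))"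
proof -
  have "(J11 * J22 - J12 * J21) * y = J11 * (J21 * x + J22 * y) - J21 * (J11 * x + J12 * y)" by (simp add: algebra_simps)
  also have "\<dots> = d * (J11+J21)" using assms by (simp add: algebra_simps)
  finally show "(J11 * J22 - J12 * J21) * y = d * (J11+J21)" .
  have "(J11 * J22 - J12 * J21) * x = J22 * (J11 * x + J12 * y) - J12 * (J21 * x + J22 * y)" by (simp add: algebra_simps)
  also have "\<dots> = -(d * (J22+J12))" using assms by (simp add: algebra_simps)
  finally show "(J11 * J22 - J12 * J21) * x = -(d * (J22+J12))" .
qed


definition Af :: "real \<Rightarrow> real \<Rightarrow> complex \<Rightarrow> complex" where
  "Af c1 c2 z = complex_of_real c1 - complex_of_real c2 * z ^ 4"
definition Rf :: "real \<Rightarrow> real \<Rightarrow> complex \<Rightarrow> complex" where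
  "Rf c1 c2 z = exp (Ln (Af c1 c2 z) / 4)"
definition Gf :: "real \<Rightarrow> real \<Rightarrow> real \<Rightarrow> complex \<Rightarrow> complex" where
  "Gf k c1 c2 z = complex_of_real k * (2 * Af c1 c2 z - z ^ 4) / (z - Rf c1 c2 z)"
definition rr :: "real \<Rightarrow> real" where
  "rr y = exp (ln y / 4)"
definition U1 :: "real \<Rightarrow> real \<Rightarrow> complex set" where
  "U1 c1 c2 = {z. Re (Af c1 c2 z) > 0}"
definition U2 :: "real \<Rightarrow> real \<Rightarrow> complex set" where
  "U2 c1 c2 = {z \<in> U1 c1 c2. Re (z - Rf c1 c2 z) > 0}"

lemma rr_pos: "rr y > 0" by (simp add: rr_def)

lemma rr_pow: "y > 0 \<Longrightarrow> rr y ^ 4 = y"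
proof -
  assume y: "y > 0"
  have "rr y ^ 4 = exp (of_nat 4 * (ln y / 4))" unfolding rr_def by (rule exp_of_nat_mult[symmetric])
  also have "\<dots> = y" using y by simp
  finally show ?thesis .
qed

lemma rr_unique: "y > 0 \<Longrightarrow> a \<ge> 0 \<Longrightarrow> a ^ 4 = y \<Longrightarrow> a = rr y"
  using power_eq_imp_eq_base[of a 4 "rr y"] rr_pow[of y] rr_pos[of y] by simp

lemma Af_real: "Af c1 c2 (complex_of_real t) = complex_of_real (c1 - c2 * t ^ 4)"
  by (simp add: Af_def)

lemma Rf_real:
  assumes "c1 - c2 * t ^ 4 > 0"
  shows "Rf c1 c2 (complex_of_real t) = complex_of_real (rr (c1 - c2 * t ^ 4))"
proof -
  have "Ln (complex_of_real (c1 - c2 * t ^ 4)) = complex_of_real (ln (c1 - c2 * t ^ 4))"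
    using assms by (rule Ln_of_real)
  then show ?thesis
    by (simp add: Rf_def Af_real rr_def exp_of_real[symmetric])
qed

lemma Rf_pow: "Af c1 c2 z \<noteq> 0 \<Longrightarrow> Rf c1 c2 z ^ 4 = Af c1 c2 z"
proof -
  assume nz: "Af c1 c2 z \<noteq> 0"
  have "Rf c1 c2 z ^ 4 = exp (of_nat 4 * (Ln (Af c1 c2 z) / 4))"
    unfolding Rf_def by (rule exp_of_nat_mult[symmetric])
  also have "\<dots> = Af c1 c2 z" using nz by simp
  finally show ?thesis .
qed

lemma Af_cnj: "Af c1 c2 (cnj z) = cnj (Af c1 c2 z)"
  by (simp add: Af_def)

lemma Rf_cnj: "Af c1 c2 z \<notin> \<real>\<^sub>\<le>\<^sub>0 \<Longrightarrow> Rf c1 c2 (cnj z) = cnj (Rf c1 c2 z)"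
  by (simp add: Rf_def Af_cnj exp_cnj cnj_Ln)

lemma Gf_cnj: "Af c1 c2 z \<notin> \<real>\<^sub>\<le>\<^sub>0 \<Longrightarrow> Gf k c1 c2 (cnj z) = cnj (Gf k c1 c2 z)"
  by (simp add: Gf_def Rf_cnj Af_cnj)

lemma U1_notin: "z \<in> U1 c1 c2 \<Longrightarrow> Af c1 c2 z \<notin> \<real>\<^sub>\<le>\<^sub>0"
  by (auto simp: U1_def complex_nonpos_Reals_iff)

lemma Af_holo: "Af c1 c2 holomorphic_on S"
  unfolding Af_def by (intro holomorphic_intros)

lemma Rf_holo: "Rf c1 c2 holomorphic_on U1 c1 c2"
proof -
  have "(\<lambda>z. exp (Ln (Af c1 c2 z) / 4)) holomorphic_on U1 c1 c2"
    by (intro holomorphic_intros Af_holo) (auto dest: U1_notin)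
  then show ?thesis by (simp add: Rf_def[abs_def])
qed

lemma open_U1: "open (U1 c1 c2)"
proof -
  have "continuous_on UNIV (\<lambda>z. Re (Af c1 c2 z))"
    unfolding Af_def by (intro continuous_intros)
  then have "open (UNIV \<inter> (\<lambda>z. Re (Af c1 c2 z)) -` {0<..})"
    by (rule continuous_open_preimage) auto
  then show ?thesis by (simp add: U1_def vimage_def)
qed

lemma open_U2: "open (U2 c1 c2)"
proof -
  have "continuous_on (U1 c1 c2) (\<lambda>z. Re (z - Rf c1 c2 z))"
    using holomorphic_on_imp_continuous_on[OF Rf_holo] by (intro continuous_intros) auto
  then have "open (U1 c1 c2 \<inter> (\<lambda>z. Re (z - Rf c1 c2 z)) -` {0<..})"
    by (rule continuous_open_preimage) (auto simp: open_U1)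
  then show ?thesis by (simp add: U2_def vimage_def Int_def)
qed

lemma U2_sub: "U2 c1 c2 \<subseteq> U1 c1 c2" by (auto simp: U2_def)

lemma Gf_holo: "Gf k c1 c2 holomorphic_on U2 c1 c2"
proof -
  have R: "Rf c1 c2 holomorphic_on U2 c1 c2" using Rf_holo U2_sub by (rule holomorphic_on_subset)
  have "(\<lambda>z. complex_of_real k * (2 * Af c1 c2 z - z ^ 4) / (z - Rf c1 c2 z)) holomorphic_on U2 c1 c2"
  proof (intro holomorphic_intros Af_holo R)
    fix z assume "z \<in> U2 c1 c2"
    then have "Re (z - Rf c1 c2 z) > 0" by (simp add: U2_def)
    then show "z - Rf c1 c2 z \<noteq> 0" by auto
  qed
  then show ?thesis by (simp add: Gf_def[abs_def])
qed

lemma cnj_ball: "z \<in> ball (complex_of_real t) r \<Longrightarrow> cnj z \<in> ball (complex_of_real t) r"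
proof -
  assume "z \<in> ball (complex_of_real t) r"
  moreover have "dist (complex_of_real t) (cnj z) = dist (complex_of_real t) z"
  proof -
    have "dist (complex_of_real t) (cnj z) = cmod (cnj (complex_of_real t - z))" by (simp add: dist_norm)
    also have "\<dots> = dist (complex_of_real t) z" by (simp only: complex_mod_cnj dist_norm)
    finally show ?thesis .
  qed
  ultimately show ?thesis by simp
qed

lemma holo_local_inverse:
  fixes G :: "complex \<Rightarrow> complex"
  assumes holo: "G holomorphic_on S" and S: "open S" "complex_of_real t0 \<in> S"
    and d: "deriv G (complex_of_real t0) \<noteq> 0"
    and cnjG: "\<And>z. z \<in> S \<Longrightarrow> cnj z \<in> S \<Longrightarrow> G (cnj z) = cnj (G z)"
    and r0: "r0 > 0"
  obtains r \<epsilon> H where "0 < r" "r \<le> r0" "ball (complex_of_real t0) r \<subseteq> S"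
    "inj_on G (ball (complex_of_real t0) r)" "\<epsilon> > 0"
    "H holomorphic_on ball (G (complex_of_real t0)) \<epsilon>"
    "\<And>w. w \<in> ball (G (complex_of_real t0)) \<epsilon> \<Longrightarrow> H w \<in> ball (complex_of_real t0) r \<and> G (H w) = w"
    "\<And>z. z \<in> ball (complex_of_real t0) r \<Longrightarrow> H (G z) = z"
    "\<And>w. w \<in> ball (G (complex_of_real t0)) \<epsilon> \<Longrightarrow> w \<in> \<real> \<Longrightarrow> H w \<in> \<real>"
proof -
  let ?t = "complex_of_real t0"
  obtain r1 where r1: "r1 > 0" "ball ?t r1 \<subseteq> S" "inj_on G (ball ?t r1)"
    using has_complex_derivative_locally_injective[OF holo S(2) S(1) d] by blast
  define r where "r = min r1 r0"
  have r: "r > 0" "r \<le> r0" "ball ?t r \<subseteq> S" using r1 r0 by (auto simp: r_def)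
  have inj: "inj_on G (ball ?t r)" using r1(3) by (rule inj_on_subset) (auto simp: r_def)
  have holr: "G holomorphic_on ball ?t r" using holo r(3) by (rule holomorphic_on_subset)
  obtain H where H1: "H holomorphic_on (G ` ball ?t r)"
    and H3: "\<And>z. z \<in> ball ?t r \<Longrightarrow> H (G z) = z"
    using holomorphic_has_inverse[OF holr open_ball inj] by blast
  have op: "open (G ` ball ?t r)" using open_mapping_thm3[OF holr open_ball inj] .
  have "G ?t \<in> G ` ball ?t r" using r by auto
  then obtain \<epsilon> where \<epsilon>: "\<epsilon> > 0" "ball (G ?t) \<epsilon> \<subseteq> G ` ball ?t r"
    using op openE by blast
  have Hh: "H holomorphic_on ball (G ?t) \<epsilon>" using H1 \<epsilon>(2) by (rule holomorphic_on_subset)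
  have Hw: "H w \<in> ball ?t r \<and> G (H w) = w" if w: "w \<in> ball (G ?t) \<epsilon>" for w
  proof -
    obtain z where z: "z \<in> ball ?t r" "w = G z" using \<epsilon>(2) w by blast
    then show ?thesis using H3 by auto
  qed
  have Hr: "H w \<in> \<real>" if w: "w \<in> ball (G ?t) \<epsilon>" "w \<in> \<real>" for w
  proof -
    define z where "z = H w"
    have z: "z \<in> ball ?t r" "G z = w" using Hw[OF w(1)] by (auto simp: z_def)
    have cz: "cnj z \<in> ball ?t r" using z(1) by (rule cnj_ball)
    have "G (cnj z) = cnj (G z)" using z(1) cz r(3) by (intro cnjG) auto
    also have "\<dots> = G z" using z(2) w(2) by (simp add: Reals_cnj_iff)
    finally have "cnj z = z" using inj cz z(1) by (auto dest: inj_onD)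
    then show ?thesis by (simp add: z_def Reals_cnj_iff)
  qed
  show ?thesis using that[OF r(1,2,3) inj \<epsilon>(1) Hh Hw H3 Hr] by blast
qed


lemma real_analytic_from_holo:
  assumes holf: "f holomorphic_on ball (complex_of_real x0) e"
  shows "real_analytic_on (\<lambda>y. Re (f (complex_of_real y))) (ball x0 e)"
  unfolding real_analytic_on_def
proof
  fix x assume x: "x \<in> ball x0 e"
  define \<rho> where "\<rho> = e - dist x0 x"
  have rho: "\<rho> > 0" using x by (simp add: \<rho>_def)
  have sub: "ball (complex_of_real x) \<rho> \<subseteq> ball (complex_of_real x0) e"
  proof
    fix w assume "w \<in> ball (complex_of_real x) \<rho>"
    hence "dist (complex_of_real x) w < \<rho>" by simp
    moreover have "dist (complex_of_real x0) w \<le> dist (complex_of_real x0) (complex_of_real x) + dist (complex_of_real x) w"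
      by (rule dist_triangle)
    moreover have "dist (complex_of_real x0) (complex_of_real x) = dist x0 x" by simp
    ultimately show "w \<in> ball (complex_of_real x0) e" by (simp add: \<rho>_def)
  qed
  have hol: "f holomorphic_on ball (complex_of_real x) \<rho>" using holf sub by (rule holomorphic_on_subset)
  define c where "c n = Re ((deriv ^^ n) f (complex_of_real x) / fact n)" for n
  show "\<exists>r>0. \<exists>c. \<forall>y. \<bar>y - x\<bar> < r \<longrightarrow> (\<lambda>n. c n * (y - x) ^ n) sums Re (f (complex_of_real y))"
  proof (intro exI[of _ \<rho>] conjI rho exI[of _ c] allI impI)
    fix y assume y: "\<bar>y - x\<bar> < \<rho>"
    have "complex_of_real y \<in> ball (complex_of_real x) \<rho>"
      using y by (simp add: dist_real_def abs_minus_commute)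
    from holomorphic_power_series[OF hol this]
    have "(\<lambda>n. (deriv ^^ n) f (complex_of_real x) / fact n * (complex_of_real y - complex_of_real x) ^ n) sums f (complex_of_real y)" .
    from sums_Re[OF this]
    have "(\<lambda>n. Re ((deriv ^^ n) f (complex_of_real x) / fact n * (complex_of_real y - complex_of_real x) ^ n)) sums Re (f (complex_of_real y))" .
    moreover have "Re ((deriv ^^ n) f (complex_of_real x) / fact n * (complex_of_real y - complex_of_real x) ^ n) = c n * (y - x) ^ n" for n
    proof -
      define w where "w = (deriv ^^ n) f (complex_of_real x) / fact n"
      have p: "(complex_of_real y - complex_of_real x) ^ n = complex_of_real ((y - x) ^ n)" by simp
      have "Re (w * (complex_of_real y - complex_of_real x) ^ n) = Re w * (y - x) ^ n"
        by (simp only: p) simp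
      then show ?thesis by (simp add: c_def w_def)
    qed
    ultimately show "(\<lambda>n. c n * (y - x) ^ n) sums Re (f (complex_of_real y))" by simp
  qed
qed

lemma zero_deriv_on_open:
  fixes \<Phi> :: "complex \<Rightarrow> complex"
  assumes "(\<Phi> has_field_derivative D) (at t)" "open S" "t \<in> S" "\<And>z. z \<in> S \<Longrightarrow> \<Phi> z = 0"
  shows "D = 0"
proof -
  have "((\<lambda>z. 0) has_field_derivative 0) (at t)" by simp
  then have "(\<Phi> has_field_derivative 0) (at t)"
    by (rule has_field_derivative_transform_within_open[OF _ assms(2,3)]) (use assms(4) in auto)
  then show ?thesis using assms(1) DERIV_unique by blast
qed

lemma detzero_alg:
  fixes L X K C2 s a E B :: complex
  assumes "L * (1 - X) - K * (2 * (- (C2 * (4 * s ^ 3))) - 4 * s ^ 3) = 0"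
    "4 * a ^ 3 * X + C2 * (4 * s ^ 3) = 0" "K = E * B" "C2 * E = 1 - E"
  shows "(- (L + 8 * K * a ^ 3)) * (- (L + 4 * B * s ^ 3)) - (L + 4 * K * s ^ 3) * (L + 4 * K * a ^ 3) = 0"
  using assms by algebra

lemma deriv_G_nonzero:
  fixes k c1 c2 ea sB t0 l0 a0 :: real
  assumes t: "complex_of_real t0 \<in> U2 c1 c2"
    and k: "k = ea * sB" and c2: "c2 * ea = 1 - ea"
    and l0: "Gf k c1 c2 (complex_of_real t0) = complex_of_real l0"
    and a0: "Rf c1 c2 (complex_of_real t0) = complex_of_real a0"
    and det: "(l0 + 8 * k * a0^3) * (l0 + 4 * sB * t0^3) - (l0 + 4 * k * t0^3) * (l0 + 4 * k * a0^3) \<noteq> 0"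
  shows "deriv (Gf k c1 c2) (complex_of_real t0) \<noteq> 0"
proof
  assume G0: "deriv (Gf k c1 c2) (complex_of_real t0) = 0"
  let ?t = "complex_of_real t0"
  let ?G = "Gf k c1 c2" and ?R = "Rf c1 c2" and ?A = "Af c1 c2"
  have tU1: "?t \<in> U1 c1 c2" using t U2_sub by auto
  have dG: "(?G has_field_derivative 0) (at ?t)"
    using holomorphic_derivI[OF Gf_holo[of k c1 c2] open_U2 t, where T=UNIV] G0 by simp
  define X where "X = deriv ?R ?t"
  have dR: "(?R has_field_derivative X) (at ?t)"
    unfolding X_def using holomorphic_derivI[OF Rf_holo[of c1 c2] open_U1 tU1, where T=UNIV] by simp
  have dA: "(?A has_field_derivative (- (complex_of_real c2 * (4 * ?t ^ 3)))) (at ?t)"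
    unfolding Af_def[abs_def] by (rule derivative_eq_intros refl | simp)+
  have dPhi1: "((\<lambda>z. ?G z * (z - ?R z) - complex_of_real k * (2 * ?A z - z ^ 4)) has_field_derivative
      (0 * (?t - ?R ?t) + ?G ?t * (1 - X) - complex_of_real k * (2 * (- (complex_of_real c2 * (4 * ?t ^ 3))) - 4 * ?t ^ 3))) (at ?t)"
    by (rule derivative_eq_intros dG dR dA refl | simp)+
  have Phi1: "?G z * (z - ?R z) - complex_of_real k * (2 * ?A z - z ^ 4) = 0" if "z \<in> U2 c1 c2" for z
  proof -
    have "z - ?R z \<noteq> 0" using that by (auto simp: U2_def)
    then show ?thesis by (simp add: Gf_def)
  qed
  have e1: "?G ?t * (1 - X) - complex_of_real k * (2 * (- (complex_of_real c2 * (4 * ?t ^ 3))) - 4 * ?t ^ 3) = 0"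
    using zero_deriv_on_open[OF dPhi1 open_U2 t Phi1] by simp
  have dPhi2: "((\<lambda>z. ?R z ^ 4 - ?A z) has_field_derivative
      (of_nat 4 * ?R ?t ^ 3 * X - (- (complex_of_real c2 * (4 * ?t ^ 3))))) (at ?t)"
    by (rule derivative_eq_intros dR dA refl | simp)+
  have Phi2: "?R z ^ 4 - ?A z = 0" if "z \<in> U1 c1 c2" for z
  proof -
    have "?A z \<noteq> 0" using U1_notin[OF that] by auto
    then show ?thesis using Rf_pow by simp
  qed
  have e2: "of_nat 4 * ?R ?t ^ 3 * X - (- (complex_of_real c2 * (4 * ?t ^ 3))) = 0"
    using zero_deriv_on_open[OF dPhi2 open_U1 tU1 Phi2] .
  define L where "L = complex_of_real l0"
  define a where "a = complex_of_real a0"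
  define s where "s = ?t"
  define K where "K = complex_of_real k"
  define C2 where "C2 = complex_of_real c2"
  define E where "E = complex_of_real ea"
  define B where "B = complex_of_real sB"
  have E1: "L * (1 - X) - K * (2 * (- (C2 * (4 * s ^ 3))) - 4 * s ^ 3) = 0"
    using e1 l0 by (simp add: L_def K_def C2_def s_def)
  have E2: "4 * a ^ 3 * X + C2 * (4 * s ^ 3) = 0"
    using e2 a0 by (simp add: a_def C2_def s_def)
  have KE: "K = E * B" using k by (simp add: K_def E_def B_def)
  have CE: "C2 * E = 1 - E" using c2 by (simp add: C2_def E_def flip: of_real_mult)
  have z: "(- (L + 8 * K * a ^ 3)) * (- (L + 4 * B * s ^ 3)) - (L + 4 * K * s ^ 3) * (L + 4 * K * a ^ 3) = 0"
    using E1 E2 KE CE by (rule detzero_alg)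
  moreover have "(- (L + 8 * K * a ^ 3)) * (- (L + 4 * B * s ^ 3)) - (L + 4 * K * s ^ 3) * (L + 4 * K * a ^ 3)
     = complex_of_real ((l0 + 8 * k * a0^3) * (l0 + 4 * sB * t0^3) - (l0 + 4 * k * t0^3) * (l0 + 4 * k * a0^3))"
    by (simp only: minus_mult_minus) (simp add: L_def K_def a_def s_def B_def)
  ultimately have "complex_of_real ((l0 + 8 * k * a0^3) * (l0 + 4 * sB * t0^3) - (l0 + 4 * k * t0^3) * (l0 + 4 * k * a0^3)) = 0" by (simp only:)
  hence "(l0 + 8 * k * a0^3) * (l0 + 4 * sB * t0^3) - (l0 + 4 * k * t0^3) * (l0 + 4 * k * a0^3) = 0" by (simp only: of_real_eq_0_iff)
  thus False using det by simp
qed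


lemma sys_equiv:
  fixes sB q ea b lam a s :: real
  assumes sB: "sB > 0" and ea: "ea > 0"
  shows "(-lam * (a - s) + ea * sB * s^4 - 2 * ea * sB * a^4 = 0 \<and> -lam * (s - a) - sB * s^4 + ea * sB * a^4 + q * b = 0)
     \<longleftrightarrow> (a^4 = q * b/(ea * sB) - (1-ea)/ea * s^4 \<and> lam * (s - a) = (ea * sB) * (2 * a^4 - s^4))"
proof -
  have k: "ea * sB \<noteq> 0" using sB ea by simp
  have A: "(-lam * (a - s) + ea * sB * s^4 - 2 * ea * sB * a^4 = 0) \<longleftrightarrow> lam * (s - a) = (ea * sB) * (2 * a^4 - s^4)"
    by (auto simp: algebra_simps)
  have B: "(a^4 = q * b/(ea * sB) - (1-ea)/ea * s^4) \<longleftrightarrow> (ea-1) * sB * s^4 - ea * sB * a^4 + q * b = 0"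
  proof -
    have "(a^4 = q * b/(ea * sB) - (1-ea)/ea * s^4) \<longleftrightarrow> (ea * sB) * a^4 = (ea * sB) * (q * b/(ea * sB) - (1-ea)/ea * s^4)"
      using k by simp
    also have "(ea * sB) * (q * b/(ea * sB) - (1-ea)/ea * s^4) = q * b - (1-ea) * sB * s^4"
      using sB ea by (simp add: field_simps)
    finally show ?thesis by (auto simp: algebra_simps)
  qed
  show ?thesis unfolding B A[symmetric] by (auto simp: algebra_simps)
qed

lemma quart_rem:
  fixes s v :: real
  assumes "s > 0" "\<bar>v\<bar> \<le> 1"
  shows "\<bar>(s+v)^4 - s^4 - 4 * s^3 * v\<bar> \<le> (6 * s^2 + 4 * s + 1) * v^2"
proof -
  have e: "(s+v)^4 - s^4 - 4 * s^3 * v = 6 * s^2 * v^2 + 4 * s * v^3 + v^4"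
    by (simp add: power2_eq_square power_numeral_reduce algebra_simps)
  have v2: "v^2 \<ge> 0" by simp
  have v3: "\<bar>v^3\<bar> \<le> v^2"
  proof -
    have "\<bar>v^3\<bar> = \<bar>v\<bar> * v^2" by (simp add: power_numeral_reduce abs_mult power2_eq_square)
    also have "\<dots> \<le> 1 * v^2" using assms(2) v2 by (intro mult_right_mono) auto
    finally show ?thesis by simp
  qed
  have v4: "\<bar>v^4\<bar> \<le> v^2"
  proof -
    have q: "v^4 = v^2 * v^2" by (simp add: power2_eq_square power_numeral_reduce)
    have "\<bar>v^4\<bar> = v^2 * v^2" unfolding q abs_mult by simp
    also have "\<dots> \<le> 1 * v^2"
    proof (intro mult_right_mono v2)
      have "v^2 = \<bar>v\<bar>^2" by simp
      also have "\<dots> \<le> 1^2" using assms(2) by (intro power_mono) auto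
      finally show "v^2 \<le> 1" by simp
    qed
    finally show ?thesis by simp
  qed
  have "\<bar>6 * s^2 * v^2 + 4 * s * v^3 + v^4\<bar> \<le> 6 * s^2 * v^2 + 4 * s * \<bar>v^3\<bar> + \<bar>v^4\<bar>"
  proof -
    have "\<bar>6 * s^2 * v^2 + 4 * s * v^3 + v^4\<bar> \<le> \<bar>6 * s^2 * v^2\<bar> + \<bar>4 * s * v^3\<bar> + \<bar>v^4\<bar>"
      by (rule order_trans[OF abs_triangle_ineq add_right_mono[OF abs_triangle_ineq]])
    moreover have "\<bar>6 * s^2 * v^2\<bar> = 6 * s^2 * v^2" by (simp add: abs_mult)
    moreover have "\<bar>4 * s * v^3\<bar> = 4 * s * \<bar>v^3\<bar>" using assms(1) by (simp add: abs_mult)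
    ultimately show ?thesis by simp
  qed
  also have "\<dots> \<le> 6 * s^2 * v^2 + 4 * s * v^2 + v^2"
    using v3 v4 assms(1) by (intro add_mono mult_left_mono) auto
  also have "\<dots> = (6 * s^2 + 4 * s + 1) * v^2" by (simp add: algebra_simps)
  finally show ?thesis unfolding e .
qed


lemma pow4: "(x::real) \<ge> 0 \<Longrightarrow> \<bar>x\<bar>^3 * x = x^4"
  by (simp add: power_numeral_reduce)

lemma pow4b: "(x::real)^3 * x = x^4"
  by (simp add: power_numeral_reduce)

lemma rem_bound:
  fixes c1 c2 u v Qs Qa :: real
  assumes "c1 \<ge> 0" "c2 \<ge> 0" "\<bar>Qs\<bar> \<le> Ps * v^2" "\<bar>Qa\<bar> \<le> Pa * u^2" "Ps \<ge> 0" "Pa \<ge> 0"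
  shows "\<bar>c1 * Qs + c2 * Qa\<bar> \<le> (c1 * Ps + c2 * Pa) * (u^2 + v^2)"
proof -
  have "\<bar>c1 * Qs + c2 * Qa\<bar> \<le> c1 * \<bar>Qs\<bar> + c2 * \<bar>Qa\<bar>"
    using assms(1,2) by (metis abs_mult abs_of_nonneg abs_triangle_ineq)
  also have "\<dots> \<le> c1 * (Ps * v^2) + c2 * (Pa * u^2)"
    using assms by (intro add_mono mult_left_mono) auto
  also have "\<dots> \<le> c1 * (Ps * (u^2 + v^2)) + c2 * (Pa * (u^2 + v^2))"
    using assms by (intro add_mono mult_left_mono) auto
  also have "\<dots> = (c1 * Ps + c2 * Pa) * (u^2 + v^2)" by (simp add: algebra_simps)
  finally show ?thesis .
qed

lemma stable_at:
  fixes ga gs sB q ea Tm Tp bm bp b lam a s \<eta>c :: real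
  assumes ga: "ga > 0" and gs: "gs > 0" and sB: "sB > 0" and ea: "ea > 0" "ea < 2" and lam: "lam \<ge> 0"
    and a: "0 < a" "a < s"
    and E1: "-lam * (a - s) + ea * sB * s^4 - 2 * ea * sB * a^4 = 0"
    and E2: "-lam * (s - a) - sB * s^4 + ea * sB * a^4 + q * b = 0"
    and hc: "\<eta>c > 0" "\<And>y. \<bar>y - s\<bar> < \<eta>c \<Longrightarrow> coalbedo Tm Tp bm bp y = b"
  shows "exp_stable (ebm_field ga gs sB q ea Tm Tp bm bp lam) (a, s)"
proof -
  define J11 where "J11 = -lam - 8 * ea * sB * a^3"
  define J12 where "J12 = lam + 4 * ea * sB * s^3"
  define J21 where "J21 = lam + 4 * ea * sB * a^3"
  define J22 where "J22 = -lam - 4 * sB * s^3"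
  define Ps where "Ps = 6 * s^2 + 4 * s + 1"
  define Pa where "Pa = 6 * a^2 + 4 * a + 1"
  define K1 where "K1 = (ea * sB * Ps + 2 * ea * sB * Pa)/ga"
  define K2 where "K2 = (sB * Ps + ea * sB * Pa)/gs"
  define \<eta> where "\<eta> = min (min a s) (min \<eta>c 1)"
  have s0: "s > 0" using a by simp
  have PsP: "Ps \<ge> 0" "Pa \<ge> 0" using a s0 by (auto simp: Ps_def Pa_def)
  have K1: "K1 \<ge> 0" using PsP ga sB ea by (simp add: K1_def)
  have K2: "K2 \<ge> 0" using PsP gs sB ea by (simp add: K2_def)
  have eta: "\<eta> > 0" using a s0 hc(1) by (simp add: \<eta>_def)
  let ?F = "ebm_field ga gs sB q ea Tm Tp bm bp lam"
  show ?thesis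
  proof (rule lyap_stable[where mA="J11/ga" and mB="J12/ga" and mC="J21/gs" and mD="J22/gs" and K="K1+K2" and \<eta>=\<eta>])
    have "8 * ea * sB * a^3 > 0" "4 * sB * s^3 > 0" using a s0 sB ea by simp_all
    then have "J11 < 0" "J22 < 0" using lam by (auto simp: J11_def J22_def)
    then show "J11/ga + J22/gs < 0" using ga gs by (simp add: add_neg_neg divide_neg_pos)
    have dp: "J11 * J22 - J12 * J21 > 0"
    proof -
      have "J11 * J22 - J12 * J21 = (lam + 8 * ea * sB * a^3) * (lam + 4 * sB * s^3) - (lam + 4 * ea * sB * s^3) * (lam + 4 * ea * sB * a^3)"
        by (simp add: J11_def J12_def J21_def J22_def algebra_simps)
      also have "\<dots> > 0" using det_pos[OF sB ea lam a E1] .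
      finally show ?thesis .
    qed
    have "J11/ga * (J22/gs) - J12/ga * (J21/gs) = (J11 * J22 - J12 * J21)/(ga * gs)" by (simp add: diff_divide_distrib)
    also have "\<dots> > 0" using dp ga gs by simp
    finally show "J11/ga * (J22/gs) - J12/ga * (J21/gs) > 0" .
    show "\<eta> > 0" by (rule eta)
    show "K1 + K2 \<ge> 0" using K1 K2 by simp
    fix u v assume u: "\<bar>u\<bar> < \<eta>" and v: "\<bar>v\<bar> < \<eta>"
    have au: "a + u > 0" using u by (auto simp: \<eta>_def abs_less_iff)
    have sv: "s + v > 0" using v by (auto simp: \<eta>_def abs_less_iff)
    have u1: "\<bar>u\<bar> \<le> 1" and v1: "\<bar>v\<bar> \<le> 1" using u v by (auto simp: \<eta>_def)
    have cb: "coalbedo Tm Tp bm bp (s + v) = b" using v by (intro hc(2)) (auto simp: \<eta>_def)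
    define Qs where "Qs = (s+v)^4 - s^4 - 4 * s^3* v"
    define Qa where "Qa = (a+u)^4 - a^4 - 4 * a^3 * u"
    have Qs: "\<bar>Qs\<bar> \<le> Ps * v^2" unfolding Qs_def Ps_def using quart_rem[OF s0 v1] .
    have Qa: "\<bar>Qa\<bar> \<le> Pa * u^2" unfolding Qa_def Pa_def using quart_rem[OF a(1) u1] .
    have N1: "rhs_a sB ea lam (a+u) (s+v) = -lam * ((a+u) - (s+v)) + ea * sB * (s+v)^4 - 2 * ea * sB * (a+u)^4"
      using au sv by (simp add: rhs_a_def mult.assoc pow4b)
    have N2: "rhs_s sB q ea Tm Tp bm bp lam (a+u) (s+v) = -lam * ((s+v) - (a+u)) - sB * (s+v)^4 + ea * sB * (a+u)^4 + q * b"
      using au sv cb by (simp add: rhs_s_def mult.assoc pow4b)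
    have I1: "(-lam * ((a+u) - (s+v)) + ea * sB * (s+v)^4 - 2 * ea * sB * (a+u)^4) - (J11 * u + J12* v)
       = (ea * sB) * Qs + (2 * ea * sB) * Qa * (-1) + (-lam * (a - s) + ea * sB * s^4 - 2 * ea * sB * a^4)"
      unfolding J11_def J12_def Qs_def Qa_def by algebra
    have I2: "(-lam * ((s+v) - (a+u)) - sB * (s+v)^4 + ea * sB * (a+u)^4 + q * b) - (J21 * u + J22* v)
       = sB * Qs * (-1) + (ea * sB) * Qa + (-lam * (s - a) - sB * s^4 + ea * sB * a^4 + q * b)"
      unfolding J21_def J22_def Qs_def Qa_def by algebra
    have B1: "\<bar>rhs_a sB ea lam (a+u) (s+v) - (J11 * u + J12* v)\<bar> \<le> (ea * sB * Ps + 2 * ea * sB * Pa) * (u^2+v^2)"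
    proof -
      have "rhs_a sB ea lam (a+u) (s+v) - (J11 * u + J12* v) = (ea * sB) * Qs + (-(2 * ea * sB)) * Qa"
        using N1 I1 E1 by simp
      moreover have "\<bar>(ea * sB) * Qs + (2 * ea * sB) * (-Qa)\<bar> \<le> ((ea * sB) * Ps + (2 * ea * sB) * Pa) * (u^2+v^2)"
        by (rule rem_bound) (use ea sB Qs Qa PsP in auto)
      ultimately show ?thesis by simp
    qed
    have B2: "\<bar>rhs_s sB q ea Tm Tp bm bp lam (a+u) (s+v) - (J21 * u + J22* v)\<bar> \<le> (sB * Ps + ea * sB * Pa) * (u^2+v^2)"
    proof -
      have "rhs_s sB q ea Tm Tp bm bp lam (a+u) (s+v) - (J21 * u + J22* v) = sB * (-Qs) + (ea * sB) * Qa"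
        using N2 I2 E2 by simp
      moreover have "\<bar>sB * (-Qs) + (ea * sB) * Qa\<bar> \<le> (sB * Ps + (ea * sB) * Pa) * (u^2+v^2)"
        by (rule rem_bound) (use ea sB Qs Qa PsP in auto)
      ultimately show ?thesis by simp
    qed
    have f1: "fst (?F (a+u, s+v)) - (J11/ga * u + J12/ga* v) = (rhs_a sB ea lam (a+u) (s+v) - (J11 * u + J12* v))/ga"
      by (simp add: ebm_field_def diff_divide_distrib add_divide_distrib)
    have f2: "snd (?F (a+u, s+v)) - (J21/gs * u + J22/gs* v) = (rhs_s sB q ea Tm Tp bm bp lam (a+u) (s+v) - (J21 * u + J22* v))/gs"
      by (simp add: ebm_field_def diff_divide_distrib add_divide_distrib)
    have uv0: "u^2 + v^2 \<ge> 0" by simp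
    have "\<bar>fst (?F (a+u, s+v)) - (J11/ga * u + J12/ga* v)\<bar> \<le> K1 * (u^2+v^2)"
      unfolding f1 K1_def using B1 ga by (simp add: divide_right_mono)
    also have "\<dots> \<le> (K1+K2) * (u^2+v^2)" using K2 uv0 by (simp add: distrib_right)
    finally show "\<bar>fst (?F (a+u, s+v)) - (J11/ga * u + J12/ga* v)\<bar> \<le> (K1+K2) * (u^2+v^2) \<and>
        \<bar>snd (?F (a+u, s+v)) - (J21/gs * u + J22/gs* v)\<bar> \<le> (K1+K2) * (u^2+v^2)"
    proof (rule conjI)
      have "\<bar>snd (?F (a+u, s+v)) - (J21/gs * u + J22/gs* v)\<bar> \<le> K2 * (u^2+v^2)"
        unfolding f2 K2_def using B2 gs by (simp add: divide_right_mono)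
      also have "\<dots> \<le> (K1+K2) * (u^2+v^2)" using K1 uv0 by (simp add: distrib_right)
      finally show "\<bar>snd (?F (a+u, s+v)) - (J21/gs * u + J22/gs* v)\<bar> \<le> (K1+K2) * (u^2+v^2)" .
    qed
  qed
qed


lemma zero_deriv_real:
  fixes \<Phi> :: "real \<Rightarrow> real"
  assumes "(\<Phi> has_real_derivative D) (at t)" "open S" "t \<in> S" "\<And>z. z \<in> S \<Longrightarrow> \<Phi> z = 0"
  shows "D = 0"
proof -
  have "((\<lambda>z. 0) has_real_derivative 0) (at t)" by simp
  then have "(\<Phi> has_real_derivative 0) (at t)"
    by (rule has_field_derivative_transform_within_open[OF _ assms(2,3)]) (use assms(4) in auto)
  then show ?thesis using assms(1) DERIV_unique by blast
qed

lemma real_analytic_on_subset: "real_analytic_on f S \<Longrightarrow> T \<subseteq> S \<Longrightarrow> real_analytic_on f T"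
  unfolding real_analytic_on_def by blast

lemma re_deriv:
  assumes "g holomorphic_on ball (complex_of_real x0) e" "y \<in> ball x0 e"
  shows "((\<lambda>x. Re (g (complex_of_real x))) has_real_derivative Re (deriv g (complex_of_real y))) (at y)"
proof -
  have "complex_of_real y \<in> ball (complex_of_real x0) e" using assms(2) by simp
  then have "(g has_field_derivative deriv g (complex_of_real y)) (at (complex_of_real y))"
    using holomorphic_derivI[OF assms(1) open_ball, where T=UNIV] by simp
  then have "((\<lambda>x. g (complex_of_real x)) has_vector_derivative deriv g (complex_of_real y)) (at y)"
    by (rule has_vector_derivative_real_field)
  then show ?thesis by (rule has_field_derivative_Re)
qed

lemma mono_dec:
  fixes f f' :: "real \<Rightarrow> real"
  assumes "l1 < l2" "\<And>x. l1 \<le> x \<Longrightarrow> x \<le> l2 \<Longrightarrow> (f has_real_derivative f' x) (at x)"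
    "\<And>x. l1 < x \<Longrightarrow> x < l2 \<Longrightarrow> f' x < 0"
  shows "f l2 < f l1"
proof -
  obtain z where z: "l1 < z" "z < l2" "f l2 - f l1 = (l2 - l1) * f' z"
    using MVT2[OF assms(1) assms(2)] by blast
  have "(l2 - l1) * f' z < 0" using assms(1) assms(3)[OF z(1,2)] by (simp add: mult_pos_neg)
  then show ?thesis using z(3) by simp
qed

lemma mono_inc:
  fixes f f' :: "real \<Rightarrow> real"
  assumes "l1 < l2" "\<And>x. l1 \<le> x \<Longrightarrow> x \<le> l2 \<Longrightarrow> (f has_real_derivative f' x) (at x)"
    "\<And>x. l1 < x \<Longrightarrow> x < l2 \<Longrightarrow> f' x > 0"
  shows "f l1 < f l2"
proof -
  obtain z where z: "l1 < z" "z < l2" "f l2 - f l1 = (l2 - l1) * f' z"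
    using MVT2[OF assms(1) assms(2)] by blast
  have "(l2 - l1) * f' z > 0" using assms(1) assms(3)[OF z(1,2)] by simp
  then show ?thesis using z(3) by simp
qed

theorem proposition2p6:
  fixes ga gs sB q ea Tm Tp bm bp lam0 Ta0 Ts0 :: real
  assumes "ga > 0" and "gs > 0" and "sB > 0" and "q > 0"
    and "0 < Tm" and "Tm < Tp" and "0 < bm" and "bm < bp"
    and "0 < ea" and "ea < 2"
    and "lam0 \<ge> 0"
    and "ebm_equilibrium sB q ea Tm Tp bm bp lam0 (Ta0, Ts0)"
    and "Ts0 \<notin> {Tm..Tp}"
  shows "\<exists>\<delta>>0. \<exists>\<rho>>0. \<exists>Ta Ts :: real \<Rightarrow> real.
     (\<forall>lam \<in> ball lam0 \<delta> \<inter> {0..}.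
        ebm_equilibrium sB q ea Tm Tp bm bp lam (Ta lam, Ts lam) \<and>
        dist (Ta lam, Ts lam) (Ta0, Ts0) < \<rho> \<and>
        (\<forall>p. ebm_equilibrium sB q ea Tm Tp bm bp lam p \<and> dist p (Ta0, Ts0) < \<rho>
              \<longrightarrow> p = (Ta lam, Ts lam)) \<and>
        exp_stable (ebm_field ga gs sB q ea Tm Tp bm bp lam) (Ta lam, Ts lam)) \<and>
     real_analytic_on Ta (ball lam0 \<delta>) \<and> real_analytic_on Ts (ball lam0 \<delta>) \<and>
     (\<forall>l1 \<in> ball lam0 \<delta> \<inter> {0..}. \<forall>l2 \<in> ball lam0 \<delta> \<inter> {0..}.
        l1 < l2 \<longrightarrow> Ts l2 < Ts l1) \<and>
     (ea < 1 \<longrightarrow> (\<forall>l1 \<in> ball lam0 \<delta> \<inter> {0..}. \<forall>l2 \<in> ball lam0 \<delta> \<inter> {0..}.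
        l1 < l2 \<longrightarrow> Ta l1 < Ta l2)) \<and>
     (1 < ea \<longrightarrow> (\<forall>l1 \<in> ball lam0 \<delta> \<inter> {0..}. \<forall>l2 \<in> ball lam0 \<delta> \<inter> {0..}.
        l1 < l2 \<longrightarrow> Ta l2 < Ta l1))"
proof -
  note ga = assms(1) and gs = assms(2) and sB = assms(3) and q = assms(4)
    and Tm = assms(5) and TmTp = assms(6) and bm = assms(7) and bmbp = assms(8)
    and ea = assms(9,10) and lam0 = assms(11) and eq0 = assms(12) and notin = assms(13)
  have Ta0nn: "Ta0 \<ge> 0" and Ts0nn: "Ts0 \<ge> 0"
    and ra0: "rhs_a sB ea lam0 Ta0 Ts0 = 0" and rs0: "rhs_s sB q ea Tm Tp bm bp lam0 Ta0 Ts0 = 0"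
    using eq0 by (auto simp: ebm_equilibrium_def)
  define b where "b = coalbedo Tm Tp bm bp Ts0"
  have bpos: "b > 0"
  proof (cases "Ts0 < Tm")
    case True then show ?thesis using bm by (simp add: b_def coalbedo_def)
  next
    case False
    then have "Tp < Ts0" using notin by auto
    then show ?thesis using bm bmbp TmTp by (simp add: b_def coalbedo_def)
  qed
  have E1_0: "-lam0 * (Ta0 - Ts0) + ea * sB * Ts0^4 - 2 * ea * sB * Ta0^4 = 0"
    using ra0 Ta0nn Ts0nn by (simp add: rhs_a_def mult.assoc pow4 pow4b)
  have E2_0: "-lam0 * (Ts0 - Ta0) - sB * Ts0^4 + ea * sB * Ta0^4 + q * b = 0"
    using rs0 Ta0nn Ts0nn by (simp add: rhs_s_def mult.assoc pow4 pow4b b_def)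
  have pos0: "0 < Ta0 \<and> Ta0 < Ts0"
    using eq_pos[OF sB q ea(1) bpos lam0 Ta0nn Ts0nn E1_0 E2_0] .
  obtain \<eta>1 where \<eta>1: "\<eta>1 > 0" "\<And>y. \<bar>y - Ts0\<bar> < \<eta>1 \<Longrightarrow> coalbedo Tm Tp bm bp y = b \<and> y > 0"
  proof (cases "Ts0 < Tm")
    case True
    show ?thesis
    proof (rule that[of "min Ts0 (Tm - Ts0)"])
      show "min Ts0 (Tm - Ts0) > 0" using True pos0 by simp
      fix y assume "\<bar>y - Ts0\<bar> < min Ts0 (Tm - Ts0)"
      then have "y < Tm" "y > 0" by (auto simp: abs_less_iff)
      then show "coalbedo Tm Tp bm bp y = b \<and> y > 0" using True by (simp add: b_def coalbedo_def)
    qed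
  next
    case False
    then have T: "Tp < Ts0" using notin by auto
    show ?thesis
    proof (rule that[of "Ts0 - Tp"])
      show "Ts0 - Tp > 0" using T by simp
      fix y assume "\<bar>y - Ts0\<bar> < Ts0 - Tp"
      then have "y > Tp" by (auto simp: abs_less_iff)
      then show "coalbedo Tm Tp bm bp y = b \<and> y > 0" using T TmTp Tm by (simp add: b_def coalbedo_def)
    qed
  qed
  define k where "k = ea * sB"
  define c1 where "c1 = q * b/(ea * sB)"
  define c2 where "c2 = (1-ea)/ea"
  have c2e: "c2 * ea = 1 - ea" using ea by (simp add: c2_def)
  have sysE: "(-lam * (a - s) + ea * sB * s^4 - 2 * ea * sB * a^4 = 0 \<and> -lam * (s - a) - sB * s^4 + ea * sB * a^4 + q * b = 0)
     \<longleftrightarrow> (a^4 = c1 - c2 * s^4 \<and> lam * (s - a) = k * (2 * a^4 - s^4))" for lam a s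
    using sys_equiv[OF sB ea(1), of lam a s q b] by (simp add: c1_def c2_def k_def)
  have sE0: "Ta0^4 = c1 - c2 * Ts0^4" and lE0: "lam0 * (Ts0 - Ta0) = k * (2 * Ta0^4 - Ts0^4)"
    using sysE[of lam0 Ta0 Ts0] E1_0 E2_0 by auto
  define A0 where "A0 = c1 - c2 * Ts0^4"
  have A0pos: "A0 > 0" using sE0 pos0 zero_less_power[of Ta0 4] by (simp add: A0_def[symmetric])
  have rrA0: "rr A0 = Ta0" using rr_unique[OF A0pos, of Ta0] sE0 pos0 by (simp add: A0_def)
  let ?t = "complex_of_real Ts0"
  let ?G = "Gf k c1 c2"
  have Rt0: "Rf c1 c2 ?t = complex_of_real Ta0"
    using Rf_real[of c1 c2 Ts0] A0pos rrA0 by (simp add: A0_def)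
  have tU2: "?t \<in> U2 c1 c2"
    using A0pos pos0 Rt0 by (simp add: U2_def U1_def Af_real A0_def)
  have lam0eq: "lam0 = k * (2 * Ta0^4 - Ts0^4)/(Ts0 - Ta0)" using lE0 pos0 by (simp add: eq_divide_eq)
  have Gt0: "?G ?t = complex_of_real lam0"
    unfolding lam0eq Gf_def Rt0 Af_real sE0[symmetric] by simp
  have det0: "(lam0 + 8 * k * Ta0^3) * (lam0 + 4 * sB * Ts0^3) - (lam0 + 4 * k * Ts0^3) * (lam0 + 4 * k * Ta0^3) \<noteq> 0"
    using det_pos[OF sB ea lam0 _ _ E1_0] pos0 by (simp add: k_def mult.assoc)
  have dG: "deriv ?G ?t \<noteq> 0"
    by (rule deriv_G_nonzero[OF tU2 k_def c2e Gt0 Rt0 det0])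
  have cnjG: "?G (cnj z) = cnj (?G z)" if "z \<in> U2 c1 c2" "cnj z \<in> U2 c1 c2" for z
    using Gf_cnj[OF U1_notin] that U2_sub by blast
  obtain r \<epsilon> H where r: "0 < r" "r \<le> \<eta>1" "ball ?t r \<subseteq> U2 c1 c2"
    and inj: "inj_on ?G (ball ?t r)" and \<epsilon>: "\<epsilon> > 0"
    and Hh: "H holomorphic_on ball (?G ?t) \<epsilon>"
    and Hw: "\<And>w. w \<in> ball (?G ?t) \<epsilon> \<Longrightarrow> H w \<in> ball ?t r \<and> ?G (H w) = w"
    and HG: "\<And>z. z \<in> ball ?t r \<Longrightarrow> H (?G z) = z"
    and Hr: "\<And>w. w \<in> ball (?G ?t) \<epsilon> \<Longrightarrow> w \<in> \<real> \<Longrightarrow> H w \<in> \<real>"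
    using holo_local_inverse[OF Gf_holo open_U2 tU2 dG cnjG \<eta>1(1)] by blast
  note Hh = Hh[unfolded Gt0] and Hw = Hw[unfolded Gt0] and Hr = Hr[unfolded Gt0]
  have RP: "c1 - c2 * t^4 > 0 \<and> Rf c1 c2 (complex_of_real t) = complex_of_real (rr (c1 - c2 * t^4))
      \<and> t - rr (c1 - c2 * t^4) > 0 \<and> coalbedo Tm Tp bm bp t = b \<and> t > 0"
    if t: "\<bar>t - Ts0\<bar> < r" for t
  proof -
    have "complex_of_real t \<in> ball ?t r" using t by (simp add: dist_real_def abs_minus_commute)
    then have tU: "complex_of_real t \<in> U2 c1 c2" using r(3) by blast
    then have "complex_of_real t \<in> U1 c1 c2" using U2_sub by blast
    then have A: "c1 - c2 * t^4 > 0" by (simp add: U1_def Af_real)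
    have R: "Rf c1 c2 (complex_of_real t) = complex_of_real (rr (c1 - c2 * t^4))" using Rf_real A .
    have "t - rr (c1 - c2 * t^4) > 0" using tU R by (simp add: U2_def)
    moreover have "coalbedo Tm Tp bm bp t = b \<and> t > 0" using \<eta>1(2)[of t] t r(2) by simp
    ultimately show ?thesis using A R by simp
  qed
  define Ts where "Ts y = Re (H (complex_of_real y))" for y
  define Ta where "Ta y = Re (Rf c1 c2 (H (complex_of_real y)))" for y
  have KP: "\<bar>Ts y - Ts0\<bar> < r \<and> H (complex_of_real y) = complex_of_real (Ts y)
      \<and> Ta y = rr (c1 - c2 * (Ts y)^4) \<and> 0 < Ta y \<and> Ta y < Ts y
      \<and> -y * (Ta y - Ts y) + ea * sB * (Ts y)^4 - 2 * ea * sB * (Ta y)^4 = 0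
      \<and> -y * (Ts y - Ta y) - sB * (Ts y)^4 + ea * sB * (Ta y)^4 + q * b = 0"
    if y: "\<bar>y - lam0\<bar> < \<epsilon>" for y
  proof -
    define w where "w = complex_of_real y"
    have wb: "w \<in> ball (complex_of_real lam0) \<epsilon>" using y by (simp add: w_def dist_real_def abs_minus_commute)
    have Hwb: "H w \<in> ball ?t r" and GHw: "?G (H w) = w" using Hw[OF wb] by auto
    have "H w \<in> \<real>" using Hr[OF wb] by (simp add: w_def)
    then have Hreal: "H w = complex_of_real (Ts y)" by (simp add: Ts_def w_def of_real_Re)
    define s where "s = Ts y"
    have sb: "\<bar>s - Ts0\<bar> < r" using Hwb Hreal by (simp add: s_def dist_real_def abs_minus_commute)
    note RPs = RP[OF sb]
    define A where "A = c1 - c2 * s^4"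
    define a where "a = rr A"
    have Apos: "A > 0" using RPs by (simp add: A_def)
    have a4: "a^4 = A" using rr_pow[OF Apos] by (simp add: a_def)
    have apos: "a > 0" by (simp add: a_def rr_pos)
    have sa: "s - a > 0" using RPs by (simp add: a_def A_def)
    have Rs: "Rf c1 c2 (complex_of_real s) = complex_of_real a" using RPs by (simp add: a_def A_def)
    have Taeq: "Ta y = a" using Hreal Rs by (simp add: Ta_def w_def s_def)
    have g1: "?G (complex_of_real s) = complex_of_real (k * (2 * A - s^4)/(s - a))"
      unfolding Gf_def Rs Af_real A_def[symmetric] by simp
    have g2: "?G (complex_of_real s) = complex_of_real y" using GHw Hreal by (simp add: s_def w_def)
    have "complex_of_real y = complex_of_real (k * (2 * A - s^4)/(s - a))" using trans[OF g2[symmetric] g1] .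
    then have "y = k * (2 * A - s^4)/(s - a)" by (simp only: of_real_eq_iff)
    then have "y * (s - a) = k * (2 * a^4 - s^4)" using sa a4 by (simp add: eq_divide_eq)
    then have E: "-y * (a - s) + ea * sB * s^4 - 2 * ea * sB * a^4 = 0 \<and> -y * (s - a) - sB * s^4 + ea * sB * a^4 + q * b = 0"
      using sysE[of y a s] a4 by (simp add: A_def)
    show ?thesis using E sb Hreal Taeq apos sa by (simp add: s_def w_def a_def A_def)
  qed
  let ?B = "ball (complex_of_real lam0) \<epsilon>"
  have contH: "continuous_on ?B H" using Hh by (rule holomorphic_on_imp_continuous_on)
  have HU1: "H ` ?B \<subseteq> U1 c1 c2" using Hw r(3) U2_sub by blast
  have RHh: "(\<lambda>w. Rf c1 c2 (H w)) holomorphic_on ?B"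
    using holomorphic_on_compose_gen[OF Hh Rf_holo HU1] by (simp add: o_def)
  have contRH: "continuous_on ?B (\<lambda>w. Rf c1 c2 (H w))" using RHh by (rule holomorphic_on_imp_continuous_on)
  have lam0B: "complex_of_real lam0 \<in> ?B" using \<epsilon> by simp
  have Hl0: "H (complex_of_real lam0) = ?t" using HG[of ?t] r(1) Gt0 by simp
  have RHl0: "Rf c1 c2 (H (complex_of_real lam0)) = complex_of_real Ta0" using Hl0 Rt0 by simp
  have r2: "r/2 > 0" using r(1) by simp
  obtain d1 where d1: "d1 > 0" "\<And>w. w \<in> ?B \<Longrightarrow> dist w (complex_of_real lam0) < d1 \<Longrightarrow> dist (H w) ?t < r/2"
    using contH lam0B r2 Hl0 unfolding continuous_on_iff by metis
  obtain d2 where d2: "d2 > 0" "\<And>w. w \<in> ?B \<Longrightarrow> dist w (complex_of_real lam0) < d2 \<Longrightarrow>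
      dist (Rf c1 c2 (H w)) (complex_of_real Ta0) < r/2"
    using contRH lam0B r2 RHl0 unfolding continuous_on_iff by metis
  define \<delta> where "\<delta> = min \<epsilon> (min d1 d2)"
  have \<delta>: "\<delta> > 0" "\<delta> \<le> \<epsilon>" using \<epsilon> d1 d2 by (auto simp: \<delta>_def)
  have inball: "\<bar>y - lam0\<bar> < \<epsilon>" if "y \<in> ball lam0 \<delta>" for y
    using that \<delta> by (simp add: dist_real_def abs_minus_commute)
  have close: "dist (Ta y, Ts y) (Ta0, Ts0) < r" if y: "y \<in> ball lam0 \<delta>" for y
  proof -
    define w where "w = complex_of_real y"
    have wB: "w \<in> ?B" using inball[OF y] by (simp add: w_def dist_real_def abs_minus_commute)
    have wd: "dist w (complex_of_real lam0) < d1" "dist w (complex_of_real lam0) < d2"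
      using y by (auto simp: w_def \<delta>_def dist_real_def abs_minus_commute)
    have "\<bar>Ts y - Ts0\<bar> \<le> cmod (H w - ?t)"
      using abs_Re_le_cmod[of "H w - ?t"] by (simp add: Ts_def w_def)
    also have "\<dots> < r/2" using d1(2)[OF wB wd(1)] by (simp add: dist_norm)
    finally have 1: "\<bar>Ts y - Ts0\<bar> < r/2" .
    have "\<bar>Ta y - Ta0\<bar> \<le> cmod (Rf c1 c2 (H w) - complex_of_real Ta0)"
      using abs_Re_le_cmod[of "Rf c1 c2 (H w) - complex_of_real Ta0"] by (simp add: Ta_def w_def)
    also have "\<dots> < r/2" using d2(2)[OF wB wd(2)] by (simp add: dist_norm)
    finally have 2: "\<bar>Ta y - Ta0\<bar> < r/2" .
    have "dist (Ta y, Ts y) (Ta0, Ts0) = sqrt ((dist (Ta y) Ta0)^2 + (dist (Ts y) Ts0)^2)"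
      by (rule dist_Pair_Pair)
    also have "\<dots> \<le> \<bar>dist (Ta y) Ta0\<bar> + \<bar>dist (Ts y) Ts0\<bar>" by (rule sqrt_sum_squares_le_sum_abs)
    also have "\<dots> < r" using 1 2 by (simp add: dist_real_def)
    finally show ?thesis .
  qed
  have conj1: "\<forall>lam \<in> ball lam0 \<delta> \<inter> {0..}.
        ebm_equilibrium sB q ea Tm Tp bm bp lam (Ta lam, Ts lam) \<and>
        dist (Ta lam, Ts lam) (Ta0, Ts0) < r \<and>
        (\<forall>p. ebm_equilibrium sB q ea Tm Tp bm bp lam p \<and> dist p (Ta0, Ts0) < r
              \<longrightarrow> p = (Ta lam, Ts lam)) \<and>
        exp_stable (ebm_field ga gs sB q ea Tm Tp bm bp lam) (Ta lam, Ts lam)"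
  proof
    fix lam assume lam: "lam \<in> ball lam0 \<delta> \<inter> {0..}"
    then have lb: "\<bar>lam - lam0\<bar> < \<epsilon>" and lnn: "lam \<ge> 0" using inball by auto
    note K = KP[OF lb]
    have sr: "\<bar>Ts lam - Ts0\<bar> < r" using K by blast
    note RPs = RP[OF sr]
    have posl: "0 < Ta lam" "Ta lam < Ts lam" using K by blast+
    have E1l: "-lam * (Ta lam - Ts lam) + ea * sB * (Ts lam)^4 - 2 * ea * sB * (Ta lam)^4 = 0" using K by blast
    have E2l: "-lam * (Ts lam - Ta lam) - sB * (Ts lam)^4 + ea * sB * (Ta lam)^4 + q * b = 0" using K by blast
    have eqm: "ebm_equilibrium sB q ea Tm Tp bm bp lam (Ta lam, Ts lam)"
      using posl E1l E2l RPs by (simp add: ebm_equilibrium_def rhs_a_def rhs_s_def mult.assoc pow4 pow4b)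
    have uniq: "p = (Ta lam, Ts lam)"
      if p: "ebm_equilibrium sB q ea Tm Tp bm bp lam p \<and> dist p (Ta0, Ts0) < r" for p
    proof -
      obtain pa ps where pp: "p = (pa, ps)" by fastforce
      have pnn: "pa \<ge> 0" "ps \<ge> 0" and rap: "rhs_a sB ea lam pa ps = 0"
        and rsp: "rhs_s sB q ea Tm Tp bm bp lam pa ps = 0"
        using p by (auto simp: ebm_equilibrium_def pp)
      have "dist ps Ts0 \<le> dist p (Ta0, Ts0)" using dist_snd_le[of p "(Ta0, Ts0)"] by (simp add: pp)
      then have psr: "\<bar>ps - Ts0\<bar> < r" using p by (simp add: dist_real_def)
      note RPp = RP[OF psr]
      have E1p: "-lam * (pa - ps) + ea * sB * ps^4 - 2 * ea * sB * pa^4 = 0"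
        using rap pnn by (simp add: rhs_a_def mult.assoc pow4 pow4b)
      have E2p: "-lam * (ps - pa) - sB * ps^4 + ea * sB * pa^4 + q * b = 0"
        using rsp pnn RPp by (simp add: rhs_s_def mult.assoc pow4 pow4b)
      have S: "pa^4 = c1 - c2 * ps^4" "lam * (ps - pa) = k * (2 * pa^4 - ps^4)"
        using sysE[of lam pa ps] E1p E2p by auto
      have par: "pa = rr (c1 - c2 * ps^4)" using rr_unique[of "c1 - c2 * ps^4" pa] RPp pnn S(1) by simp
      have Rps: "Rf c1 c2 (complex_of_real ps) = complex_of_real pa" using RPp par by simp
      have spa: "ps - pa > 0" using RPp par by simp
      have lq: "lam = k * (2 * pa^4 - ps^4)/(ps - pa)" using S(2) spa by (simp add: eq_divide_eq)
      have g1: "?G (complex_of_real ps) = complex_of_real lam"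
        unfolding lq Gf_def Rps Af_real S(1)[symmetric] by simp
      have wB: "complex_of_real lam \<in> ?B" using lb by (simp add: dist_real_def abs_minus_commute)
      have g2: "?G (complex_of_real (Ts lam)) = complex_of_real lam" using Hw[OF wB] K by simp
      have b1: "complex_of_real ps \<in> ball ?t r" using psr by (simp add: dist_real_def abs_minus_commute)
      have b2: "complex_of_real (Ts lam) \<in> ball ?t r" using sr by (simp add: dist_real_def abs_minus_commute)
      have "complex_of_real ps = complex_of_real (Ts lam)"
        using inj_onD[OF inj _ b1 b2] g1 g2 by simp
      then have psT: "ps = Ts lam" by simp
      have "pa = Ta lam" using par K psT by simp
      then show ?thesis using pp psT by simp
    qed
    have stab: "exp_stable (ebm_field ga gs sB q ea Tm Tp bm bp lam) (Ta lam, Ts lam)"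
    proof (rule stable_at[OF ga gs sB ea lnn posl E1l E2l])
      show "r - \<bar>Ts lam - Ts0\<bar> > 0" using sr by simp
      fix y assume "\<bar>y - Ts lam\<bar> < r - \<bar>Ts lam - Ts0\<bar>"
      then have "\<bar>y - Ts0\<bar> < r" by linarith
      then show "coalbedo Tm Tp bm bp y = b" using RP by blast
    qed
    show "ebm_equilibrium sB q ea Tm Tp bm bp lam (Ta lam, Ts lam) \<and>
        dist (Ta lam, Ts lam) (Ta0, Ts0) < r \<and>
        (\<forall>p. ebm_equilibrium sB q ea Tm Tp bm bp lam p \<and> dist p (Ta0, Ts0) < r
              \<longrightarrow> p = (Ta lam, Ts lam)) \<and>
        exp_stable (ebm_field ga gs sB q ea Tm Tp bm bp lam) (Ta lam, Ts lam)"
      using eqm close[of lam] lam uniq stab by blast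
  qed
  have ballsub: "ball lam0 \<delta> \<subseteq> ball lam0 \<epsilon>" using \<delta>(2) by (rule subset_ball)
  have anTs: "real_analytic_on Ts (ball lam0 \<delta>)"
    using real_analytic_on_subset[OF real_analytic_from_holo[OF Hh] ballsub] by (simp add: Ts_def[abs_def])
  have anTa: "real_analytic_on Ta (ball lam0 \<delta>)"
    using real_analytic_on_subset[OF real_analytic_from_holo[OF RHh] ballsub] by (simp add: Ta_def[abs_def])
  define TS' where "TS' y = Re (deriv H (complex_of_real y))" for y
  define TA' where "TA' y = Re (deriv (\<lambda>w. Rf c1 c2 (H w)) (complex_of_real y))" for y
  have dTs: "(Ts has_real_derivative TS' y) (at y)" if "y \<in> ball lam0 \<delta>" for y
    using re_deriv[OF Hh, of y] that ballsub by (auto simp: Ts_def[abs_def] TS'_def)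
  have dTa: "(Ta has_real_derivative TA' y) (at y)" if "y \<in> ball lam0 \<delta>" for y
    using re_deriv[OF RHh, of y] that ballsub by (auto simp: Ta_def[abs_def] TA'_def)
  have signs: "det * TS' y = (Ts y - Ta y) * (- 4 * ea * sB * (Ta y)^3) \<and>
      det * TA' y = (Ts y - Ta y) * (4 * sB * (Ts y)^3 * (1 - ea))"
    if y: "y \<in> ball lam0 \<delta>" and det: "det = (-y - 8 * ea * sB * (Ta y)^3) * (-y - 4 * sB * (Ts y)^3)
        - (y + 4 * ea * sB * (Ts y)^3) * (y + 4 * ea * sB * (Ta y)^3)" for y det
  proof -
    note K = KP[OF inball[OF y]]
    define P1 where "P1 x = -x * (Ta x - Ts x) + ea * sB * (Ts x)^4 - 2 * ea * sB * (Ta x)^4" for x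
    define P2 where "P2 x = -x * (Ts x - Ta x) - sB * (Ts x)^4 + ea * sB * (Ta x)^4 + q * b" for x
    have P1z: "P1 x = 0" if "x \<in> ball lam0 \<delta>" for x using KP[OF inball[OF that]] unfolding P1_def by blast
    have P2z: "P2 x = 0" if "x \<in> ball lam0 \<delta>" for x using KP[OF inball[OF that]] unfolding P2_def by blast
    have dP1: "(P1 has_real_derivative
        (-(Ta y - Ts y) - y * (TA' y - TS' y) + ea * sB * (4 * (Ts y)^3 * TS' y) - 2 * ea * sB * (4 * (Ta y)^3 * TA' y))) (at y)"
      unfolding P1_def[abs_def]
      by (rule derivative_eq_intros dTa[OF y] dTs[OF y] refl | simp add: algebra_simps)+
    have dP2: "(P2 has_real_derivative
        (-(Ts y - Ta y) - y * (TS' y - TA' y) - sB * (4 * (Ts y)^3 * TS' y) + ea * sB * (4 * (Ta y)^3 * TA' y))) (at y)"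
      unfolding P2_def[abs_def]
      by (rule derivative_eq_intros dTa[OF y] dTs[OF y] refl | simp add: algebra_simps)+
    have z1: "-(Ta y - Ts y) - y * (TA' y - TS' y) + ea * sB * (4 * (Ts y)^3 * TS' y) - 2 * ea * sB * (4 * (Ta y)^3 * TA' y) = 0"
      by (rule zero_deriv_real[OF dP1 open_ball y P1z])
    have z2: "-(Ts y - Ta y) - y * (TS' y - TA' y) - sB * (4 * (Ts y)^3 * TS' y) + ea * sB * (4 * (Ta y)^3 * TA' y) = 0"
      by (rule zero_deriv_real[OF dP2 open_ball y P2z])
    define J11 where "J11 = -y - 8 * ea * sB * (Ta y)^3"
    define J12 where "J12 = y + 4 * ea * sB * (Ts y)^3"
    define J21 where "J21 = y + 4 * ea * sB * (Ta y)^3"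
    define J22 where "J22 = -y - 4 * sB * (Ts y)^3"
    define d where "d = Ts y - Ta y"
    have L1: "J11 * TA' y + J12 * TS' y = -d" using z1 unfolding J11_def J12_def d_def by algebra
    have L2: "J21 * TA' y + J22 * TS' y = d" using z2 unfolding J21_def J22_def d_def by algebra
    have dd: "det = J11 * J22 - J12 * J21" unfolding det J11_def J12_def J21_def J22_def by simp
    show ?thesis
      using cramer2[OF L1 L2] unfolding dd[symmetric]
      by (simp add: J11_def J12_def J21_def J22_def d_def algebra_simps)
  qed
  have sgn: "TS' y < 0 \<and> (ea < 1 \<longrightarrow> TA' y > 0) \<and> (1 < ea \<longrightarrow> TA' y < 0)"
    if y: "y \<in> ball lam0 \<delta>" and ypos: "y > 0" for y
  proof -
    note K = KP[OF inball[OF y]]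
    have posy: "0 < Ta y" "Ta y < Ts y" using K by blast+
    have E1y: "-y * (Ta y - Ts y) + ea * sB * (Ts y)^4 - 2 * ea * sB * (Ta y)^4 = 0" using K by blast
    define det where "det = (-y - 8 * ea * sB * (Ta y)^3) * (-y - 4 * sB * (Ts y)^3)
        - (y + 4 * ea * sB * (Ts y)^3) * (y + 4 * ea * sB * (Ta y)^3)"
    have dpos: "det > 0"
    proof -
      have "det = (y + 8 * ea * sB * (Ta y)^3) * (y + 4 * sB * (Ts y)^3) - (y + 4 * ea * sB * (Ts y)^3) * (y + 4 * ea * sB * (Ta y)^3)"
        unfolding det_def by algebra
      also have "\<dots> > 0" using det_pos[OF sB ea _ posy E1y] ypos by simp
      finally show ?thesis .
    qed
    note S = signs[OF y det_def]
    have d0: "Ts y - Ta y > 0" using posy by simp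
    have t3: "(Ts y)^3 > 0" "(Ta y)^3 > 0" using posy by simp_all
    have "(Ts y - Ta y) * (- 4 * ea * sB * (Ta y)^3) < 0"
      using d0 t3 ea sB by (simp add: mult_pos_neg)
    then have "det * TS' y < 0" using S by simp
    then have 1: "TS' y < 0" using dpos by (simp add: mult_less_0_iff)
    have 2: "TA' y > 0" if "ea < 1"
    proof -
      have "(Ts y - Ta y) * (4 * sB * (Ts y)^3 * (1 - ea)) > 0" using d0 t3 sB that by simp
      then have "det * TA' y > 0" using S by simp
      then show ?thesis using dpos by (simp add: zero_less_mult_iff)
    qed
    have 3: "TA' y < 0" if "1 < ea"
    proof -
      have "(4 * sB * (Ts y)^3) * (1 - ea) < 0" using t3 sB that by (simp add: mult_pos_neg)
      then have "(Ts y - Ta y) * (4 * sB * (Ts y)^3 * (1 - ea)) < 0" using d0 by (simp add: mult_pos_neg)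
      then have "det * TA' y < 0" using S by simp
      then show ?thesis using dpos by (simp add: mult_less_0_iff)
    qed
    show ?thesis using 1 2 3 by blast
  qed
  have inb: "x \<in> ball lam0 \<delta>" if "l1 \<in> ball lam0 \<delta>" "l2 \<in> ball lam0 \<delta>" "l1 \<le> x" "x \<le> l2" for l1 l2 x
    using that by (auto simp: dist_real_def abs_less_iff)
  have monoTs: "\<forall>l1 \<in> ball lam0 \<delta> \<inter> {0..}. \<forall>l2 \<in> ball lam0 \<delta> \<inter> {0..}. l1 < l2 \<longrightarrow> Ts l2 < Ts l1"
  proof (intro ballI impI)
    fix l1 l2 assume l: "l1 \<in> ball lam0 \<delta> \<inter> {0..}" "l2 \<in> ball lam0 \<delta> \<inter> {0..}" "l1 < l2"
    show "Ts l2 < Ts l1"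
    proof (rule mono_dec[OF l(3)])
      fix x assume "l1 \<le> x" "x \<le> l2"
      then show "(Ts has_real_derivative TS' x) (at x)" using l inb by (intro dTs) blast
    next
      fix x assume x: "l1 < x" "x < l2"
      then have "x \<in> ball lam0 \<delta>" "x > 0" using l inb[of l1 l2 x] by auto
      then show "TS' x < 0" using sgn by blast
    qed
  qed
  have monoTa1: "ea < 1 \<longrightarrow> (\<forall>l1 \<in> ball lam0 \<delta> \<inter> {0..}. \<forall>l2 \<in> ball lam0 \<delta> \<inter> {0..}. l1 < l2 \<longrightarrow> Ta l1 < Ta l2)"
  proof (intro impI ballI)
    fix l1 l2 assume e: "ea < 1" and l: "l1 \<in> ball lam0 \<delta> \<inter> {0..}" "l2 \<in> ball lam0 \<delta> \<inter> {0..}" "l1 < l2"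
    show "Ta l1 < Ta l2"
    proof (rule mono_inc[OF l(3)])
      fix x assume "l1 \<le> x" "x \<le> l2"
      then show "(Ta has_real_derivative TA' x) (at x)" using l inb by (intro dTa) blast
    next
      fix x assume x: "l1 < x" "x < l2"
      then have "x \<in> ball lam0 \<delta>" "x > 0" using l inb[of l1 l2 x] by auto
      then show "TA' x > 0" using sgn e by blast
    qed
  qed
  have monoTa2: "1 < ea \<longrightarrow> (\<forall>l1 \<in> ball lam0 \<delta> \<inter> {0..}. \<forall>l2 \<in> ball lam0 \<delta> \<inter> {0..}. l1 < l2 \<longrightarrow> Ta l2 < Ta l1)"
  proof (intro impI ballI)
    fix l1 l2 assume e: "1 < ea" and l: "l1 \<in> ball lam0 \<delta> \<inter> {0..}" "l2 \<in> ball lam0 \<delta> \<inter> {0..}" "l1 < l2"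
    show "Ta l2 < Ta l1"
    proof (rule mono_dec[OF l(3)])
      fix x assume "l1 \<le> x" "x \<le> l2"
      then show "(Ta has_real_derivative TA' x) (at x)" using l inb by (intro dTa) blast
    next
      fix x assume x: "l1 < x" "x < l2"
      then have "x \<in> ball lam0 \<delta>" "x > 0" using l inb[of l1 l2 x] by auto
      then show "TA' x < 0" using sgn e by blast
    qed
  qed
  show ?thesis
    apply (rule exI[of _ \<delta>])
    apply (rule conjI[OF \<delta>(1)])
    apply (rule exI[of _ r])
    apply (rule conjI[OF r(1)])
    apply (rule exI[of _ Ta])
    apply (rule exI[of _ Ts])
    using conj1 anTa anTs monoTs monoTa1 monoTa2 by blast
qed

end
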